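(* For any $\mathbb{K}$-linear map $Z_R:\mathfrak{h}^0\rightarrow R$, $Z_R$ satisfies the double shuffle relations if and only if $$Z_R^t(w_1\overset{t}{\mathbin{\sqcup\!\sqcup}} w_2)=Z_R^t(w_1)Z_R^t(w_2)=Z_R^t(w_1\overset{t}{\ast} w_2), \quad (\forall w_1,w_2\in\mathfrak{h}^0_t).$$
   Context: Let $\mathbb{K}$ be a field of characteristic zero and $R$ a commutative $\mathbb{K}$-algebra with unit. Let $A=\{x,y\}$ be an alphabet of two noncommutative letters, $A^{\ast}$ the set of words (with empty word $1$), $\mathfrak{h}_t=\mathbb{K}[t]\langle A\rangle$, $\mathfrak{h}_t^1=\mathbb{K}[t]+\mathfrak{h}_ty$, $\mathfrak{h}_t^0=\mathbb{K}[t]+x\mathfrak{h}_ty$, and $\mathfrak{h},\mathfrak{h}^1,\mathfrak{h}^0$ the corresponding objects at $t=0$ (so $\mathfrak{h}_t^0=\mathfrak{h}^0[t]$). Put $z_k=x^{k-1}y$. The $t$-shuffle product $\overset{t}{\mathbin{\sqcup\!\sqcup}}$ on $\mathfrak{h}_t$ is $\mathbb{K}[t]$-bilinear with $1\overset{t}{\mathbin{\sqcup\!\sqcup}} w=w\overset{t}{\mathbin{\sqcup\!\sqcup}} 1=w$ and $aw_1\overset{t}{\mathbin{\sqcup\!\sqcup}} bw_2=a(w_1\overset{t}{\mathbin{\sqcup\!\sqcup}} bw_2)+b(aw_1\overset{t}{\mathbin{\sqcup\!\sqcup}} w_2)-\delta(w_1)\rho(a)bw_2-\delta(w_2)\rho(b)aw_1$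 for words $w,w_1,w_2$ and letters $a,b$, where $\delta(w)=1$ if $w=1$ and $0$ otherwise, $\rho(x)=0$, $\rho(y)=tx$. The $t$-harmonic shuffle product $\overset{t}{\ast}$ on $\mathfrak{h}_t^1$ is $\mathbb{K}[t]$-bilinear with $1\overset{t}{\ast} w=w\overset{t}{\ast}1=w$ and $z_kw_1\overset{t}{\ast} z_lw_2=z_k(w_1\overset{t}{\ast} z_lw_2)+z_l(z_kw_1\overset{t}{\ast} w_2)+(1-2t)z_{k+l}(w_1\overset{t}{\ast} w_2)+[1-\delta(w_1)\delta(w_2)](t^2-t)x^{k+l}(w_1\overset{t}{\ast} w_2)$. At $t=0$ these are the usual shuffle product $\mathbin{\sqcup\!\sqcup}$ and harmonic shuffle product $\ast$. Let $\sigma_t$ be the algebra automorphism of $\mathfrak{h}_t$ with $\sigma_t(x)=x$, $\sigma_t(y)=tx+y$, and $S_t$ the $\mathbb{K}[t]$-linear map with $S_t(1)=1$, $S_t(wa)=\sigma_t(w)a$ for $w\in A^\ast$, $a\in A$. For a $\mathbb{K}$-linear map $Z_R:\mathfrak{h}^0\to R$, extended $\mathbb{K}[t]$-linearly to $\mathfrak{h}^0_t\to R[t]$, define $Z_R^t=Z_R\circ S_t$. $Z_R$ is said to satisfy the double shuffle relations if $Z_R(w_1\mathbin{\sqcup\!\sqcup} w_2)=Z_R(w_1)Z_R(w_2)=Z_R(w_1\ast w_2)$ for all $w_1,w_2\in\mathfrak{h}^0$. *)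

theory Defs
  imports "HOL-Computational_Algebra.Polynomial" "HOL-Library.Poly_Mapping"
begin

text \<open>Letters x, y; words are lists of letters; noncommutative polynomials over a
coefficient ring 'a are finitely supported maps  word =>0 'a.
h = (word =>0 'k),  h_t = (word =>0 'k poly)  (K[t]-coefficients).\<close>

datatype letter = X | Y

type_synonym word = "letter list"

definition smulW :: "'a::semiring_0 \<Rightarrow> (word \<Rightarrow>\<^sub>0 'a) \<Rightarrow> (word \<Rightarrow>\<^sub>0 'a)" where
  "smulW c p = Poly_Mapping.map (\<lambda>a. c * a) p"

definition preW :: "word \<Rightarrow> (word \<Rightarrow>\<^sub>0 'a::comm_monoid_add) \<Rightarrow> (word \<Rightarrow>\<^sub>0 'a)" where
  "preW u p = (\<Sum>w\<in>Poly_Mapping.keys p. Poly_Mapping.single (u @ w) (Poly_Mapping.lookup p w))"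

definition sufW :: "word \<Rightarrow> (word \<Rightarrow>\<^sub>0 'a::comm_monoid_add) \<Rightarrow> (word \<Rightarrow>\<^sub>0 'a)" where
  "sufW u p = (\<Sum>w\<in>Poly_Mapping.keys p. Poly_Mapping.single (w @ u) (Poly_Mapping.lookup p w))"

definition wd :: "word \<Rightarrow> (word \<Rightarrow>\<^sub>0 'a::{zero,one})" where
  "wd w = Poly_Mapping.single w 1"

definition bilin :: "(word \<Rightarrow> word \<Rightarrow> (word \<Rightarrow>\<^sub>0 'a::comm_semiring_0)) \<Rightarrow>
    (word \<Rightarrow>\<^sub>0 'a) \<Rightarrow> (word \<Rightarrow>\<^sub>0 'a) \<Rightarrow> (word \<Rightarrow>\<^sub>0 'a)" where
  "bilin B p q = (\<Sum>u\<in>Poly_Mapping.keys p. \<Sum>v\<in>Poly_Mapping.keys q. smulW (Poly_Mapping.lookup p u * Poly_Mapping.lookup q v) (B u v))"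

definition lin :: "(word \<Rightarrow> (word \<Rightarrow>\<^sub>0 'a::semiring_0)) \<Rightarrow> (word \<Rightarrow>\<^sub>0 'a) \<Rightarrow> (word \<Rightarrow>\<^sub>0 'a)" where
  "lin B p = (\<Sum>u\<in>Poly_Mapping.keys p. smulW (Poly_Mapping.lookup p u) (B u))"

text \<open>Shuffle product with parameter tau on words:
  rho(x) = 0, rho(y) = tau x.  tau = [:0,1:] (i.e. t) over 'k poly gives the t-shuffle;
  tau = 0 over 'k gives the usual shuffle product.\<close>
definition rhoW :: "'a::comm_ring_1 \<Rightarrow> letter \<Rightarrow> word \<Rightarrow> (word \<Rightarrow>\<^sub>0 'a)" where
  "rhoW tau a w = (case a of X \<Rightarrow> 0 | Y \<Rightarrow> Poly_Mapping.single (X # w) tau)"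

fun shW :: "'a::comm_ring_1 \<Rightarrow> word \<Rightarrow> word \<Rightarrow> (word \<Rightarrow>\<^sub>0 'a)" where
  "shW tau [] w = wd w"
| "shW tau (a # w1) [] = wd (a # w1)"
| "shW tau (a # w1) (b # w2) =
     preW [a] (shW tau w1 (b # w2)) + preW [b] (shW tau (a # w1) w2)
     - (if w1 = [] then rhoW tau a (b # w2) else 0)
     - (if w2 = [] then rhoW tau b (a # w1) else 0)"

definition shuffle :: "(word \<Rightarrow>\<^sub>0 'a::comm_ring_1) \<Rightarrow> (word \<Rightarrow>\<^sub>0 'a) \<Rightarrow> (word \<Rightarrow>\<^sub>0 'a)" where
  "shuffle = bilin (shW 0)"

definition tshuffle :: "(word \<Rightarrow>\<^sub>0 'k::comm_ring_1 poly) \<Rightarrow> (word \<Rightarrow>\<^sub>0 'k poly) \<Rightarrow> (word \<Rightarrow>\<^sub>0 'k poly)" where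
  "tshuffle = bilin (shW [:0, 1:])"

text \<open>z_k = x^(k-1) y; a word in h^1 is a product z_{k1} ... z_{kn}; we encode it by [k1,...,kn].\<close>
definition zw :: "nat \<Rightarrow> word" where
  "zw k = replicate (k - 1) X @ [Y]"

definition zsw :: "nat list \<Rightarrow> word" where
  "zsw ks = concat (map zw ks)"

fun zsaux :: "nat \<Rightarrow> word \<Rightarrow> nat list" where
  "zsaux k [] = []"
| "zsaux k (X # w) = zsaux (Suc k) w"
| "zsaux k (Y # w) = Suc k # zsaux 0 w"

definition zs :: "word \<Rightarrow> nat list" where
  "zs w = zsaux 0 w"

fun hsZ :: "'a::comm_ring_1 \<Rightarrow> nat list \<Rightarrow> nat list \<Rightarrow> (word \<Rightarrow>\<^sub>0 'a)" where
  "hsZ tau [] v = wd (zsw v)"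
| "hsZ tau (k # u) [] = wd (zsw (k # u))"
| "hsZ tau (k # u) (l # v) =
     preW (zw k) (hsZ tau u (l # v)) + preW (zw l) (hsZ tau (k # u) v)
     + smulW (1 - 2 * tau) (preW (zw (k + l)) (hsZ tau u v))
     + (if u = [] \<and> v = [] then 0
        else smulW (tau ^ 2 - tau) (preW (replicate (k + l) X) (hsZ tau u v)))"

definition hsW :: "'a::comm_ring_1 \<Rightarrow> word \<Rightarrow> word \<Rightarrow> (word \<Rightarrow>\<^sub>0 'a)" where
  "hsW tau u v = hsZ tau (zs u) (zs v)"

definition harmonic :: "(word \<Rightarrow>\<^sub>0 'a::comm_ring_1) \<Rightarrow> (word \<Rightarrow>\<^sub>0 'a) \<Rightarrow> (word \<Rightarrow>\<^sub>0 'a)" where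
  "harmonic = bilin (hsW 0)"

definition tharmonic :: "(word \<Rightarrow>\<^sub>0 'k::comm_ring_1 poly) \<Rightarrow> (word \<Rightarrow>\<^sub>0 'k poly) \<Rightarrow> (word \<Rightarrow>\<^sub>0 'k poly)" where
  "tharmonic = bilin (hsW [:0, 1:])"

definition in_h0 :: "(word \<Rightarrow>\<^sub>0 'a::zero) \<Rightarrow> bool" where
  "in_h0 p \<longleftrightarrow> (\<forall>w\<in>Poly_Mapping.keys p. w = [] \<or> (hd w = X \<and> last w = Y))"

fun sigW :: "word \<Rightarrow> (word \<Rightarrow>\<^sub>0 'k::comm_ring_1 poly)" where
  "sigW [] = wd []"
| "sigW (X # w) = preW [X] (sigW w)"
| "sigW (Y # w) = preW [Y] (sigW w) + smulW [:0, 1:] (preW [X] (sigW w))"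

definition StW :: "word \<Rightarrow> (word \<Rightarrow>\<^sub>0 'k::comm_ring_1 poly)" where
  "StW w = (if w = [] then wd [] else sufW [last w] (sigW (butlast w)))"

definition St :: "(word \<Rightarrow>\<^sub>0 'k::comm_ring_1 poly) \<Rightarrow> (word \<Rightarrow>\<^sub>0 'k poly)" where
  "St p = lin StW p"

text \<open>K-linear map Z on h^0 into a commutative K-algebra R with structure map phi\<close>
definition is_K_algebra_hom :: "('k::field \<Rightarrow> 'r::comm_ring_1) \<Rightarrow> bool" where
  "is_K_algebra_hom phi \<longleftrightarrow> phi 1 = 1 \<and> (\<forall>a b. phi (a + b) = phi a + phi b)
      \<and> (\<forall>a b. phi (a * b) = phi a * phi b)"

definition K_linear_on_h0 :: "('k::field \<Rightarrow> 'r::comm_ring_1) \<Rightarrow> ((word \<Rightarrow>\<^sub>0 'k) \<Rightarrow> 'r) \<Rightarrow> bool" where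
  "K_linear_on_h0 phi Z \<longleftrightarrow>
     (\<forall>p q. in_h0 p \<longrightarrow> in_h0 q \<longrightarrow> Z (p + q) = Z p + Z q)
   \<and> (\<forall>c p. in_h0 p \<longrightarrow> Z (smulW c p) = phi c * Z p)"

text \<open>the K[t]-linear extension h^0_t = h^0[t] -> R[t]: coefficient of t^n of the result
  is Z applied to the coefficient of t^n\<close>
definition coeffW :: "(word \<Rightarrow>\<^sub>0 'k::zero poly) \<Rightarrow> nat \<Rightarrow> (word \<Rightarrow>\<^sub>0 'k)" where
  "coeffW p n = Poly_Mapping.map (\<lambda>c. coeff c n) p"

definition Zext :: "((word \<Rightarrow>\<^sub>0 'k::field) \<Rightarrow> 'r::comm_ring_1) \<Rightarrow> (word \<Rightarrow>\<^sub>0 'k poly) \<Rightarrow> 'r poly" where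
  "Zext Z p = (\<Sum>n\<le>(\<Sum>w\<in>Poly_Mapping.keys p. Polynomial.degree (Poly_Mapping.lookup p w)). monom (Z (coeffW p n)) n)"

definition Zt :: "((word \<Rightarrow>\<^sub>0 'k::field) \<Rightarrow> 'r::comm_ring_1) \<Rightarrow> (word \<Rightarrow>\<^sub>0 'k poly) \<Rightarrow> 'r poly" where
  "Zt Z p = Zext Z (St p)"

definition double_shuffle :: "((word \<Rightarrow>\<^sub>0 'k::field) \<Rightarrow> 'r::comm_ring_1) \<Rightarrow> bool" where
  "double_shuffle Z \<longleftrightarrow> (\<forall>w1 w2. in_h0 w1 \<longrightarrow> in_h0 w2 \<longrightarrow>
      Z (shuffle w1 w2) = Z w1 * Z w2 \<and> Z w1 * Z w2 = Z (harmonic w1 w2))"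

end

theory Submission
  imports Defs
begin

section \<open>Linear algebra on word polynomials\<close>

lemma lookup_smulW [simp]: "Poly_Mapping.lookup (smulW c p) w = c * Poly_Mapping.lookup p w"
  by (simp add: smulW_def Poly_Mapping.map.rep_eq when_def)

lemma lookup_wd: "Poly_Mapping.lookup (wd w) v = (if v = w then 1 else 0)"
  by (simp add: wd_def lookup_single)

lemma smulW_add: "smulW c (p + q) = smulW c p + smulW c q"
  by (rule poly_mapping_eqI) (simp add: lookup_add algebra_simps)
lemma smulW_add_left: "smulW (a + b) p = smulW a p + smulW b p"
  by (rule poly_mapping_eqI) (simp add: lookup_add algebra_simps)
lemma smulW_diff: "smulW (c::'a::comm_ring_1) (p - q) = smulW c p - smulW c q"
  by (rule poly_mapping_eqI) (simp add: lookup_minus algebra_simps)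
lemma smulW_diff_left: "smulW ((a::'a::comm_ring_1) - b) p = smulW a p - smulW b p"
  by (rule poly_mapping_eqI) (simp add: lookup_minus algebra_simps)
lemma smulW_smulW [simp]: "smulW a (smulW b p) = smulW (a * b) (p :: _ \<Rightarrow>\<^sub>0 'a::comm_semiring_1)"
  by (rule poly_mapping_eqI) (simp add: algebra_simps)
lemma smulW_1 [simp]: "smulW 1 p = (p :: _ \<Rightarrow>\<^sub>0 'a::comm_semiring_1)"
  by (rule poly_mapping_eqI) simp
lemma smulW_0 [simp]: "smulW 0 p = 0"
  by (rule poly_mapping_eqI) simp
lemma smulW_zero [simp]: "smulW c 0 = 0"
  by (rule poly_mapping_eqI) simp
lemma smulW_minus: "smulW (c::'a::comm_ring_1) (- p) = - smulW c p"
  by (rule poly_mapping_eqI) simp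
lemma smulW_sum: "smulW c (\<Sum>i\<in>I. f i) = (\<Sum>i\<in>I. smulW c (f i))"
  by (induction I rule: infinite_finite_induct) (simp_all add: smulW_add)
lemma smulW_wd: "smulW c (wd w) = Poly_Mapping.single w (c::'a::comm_semiring_1)"
  by (rule poly_mapping_eqI) (simp add: lookup_wd lookup_single when_def)
lemma keys_smulW: "Poly_Mapping.keys (smulW c p) \<subseteq> Poly_Mapping.keys p"
  by (auto simp: in_keys_iff)
lemma keys_wd: "Poly_Mapping.keys (wd w) \<subseteq> {w}"
  by (auto simp: in_keys_iff lookup_wd split: if_splits)
lemma keys_diff_sub: "Poly_Mapping.keys ((p::_ \<Rightarrow>\<^sub>0 'a::ab_group_add) - q) \<subseteq> Poly_Mapping.keys p \<union> Poly_Mapping.keys q"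
  by (auto simp: in_keys_iff lookup_minus)
lemma keys_sum_sub: "Poly_Mapping.keys (sum f I) \<subseteq> (\<Union>i\<in>I. Poly_Mapping.keys (f i))"
proof (induction I rule: infinite_finite_induct)
  case (insert i I)
  then show ?case using keys_add [of "f i" "sum f I"] by auto
qed auto

lemma lin_superset:
  assumes "finite S" "Poly_Mapping.keys p \<subseteq> S"
  shows "lin f p = (\<Sum>u\<in>S. smulW (Poly_Mapping.lookup p u) (f u))"
  unfolding lin_def using assms
  by (intro sum.mono_neutral_cong_left) (auto simp: in_keys_iff)

lemma lin_add: "lin f (p + q) = lin f p + lin f q"
proof -
  let ?S = "Poly_Mapping.keys p \<union> Poly_Mapping.keys q"
  have "lin f (p + q) = (\<Sum>u\<in>?S. smulW (Poly_Mapping.lookup (p+q) u) (f u))"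
    by (rule lin_superset) (auto simp: keys_add)
  also have "\<dots> = (\<Sum>u\<in>?S. smulW (Poly_Mapping.lookup p u) (f u)) + (\<Sum>u\<in>?S. smulW (Poly_Mapping.lookup q u) (f u))"
    by (simp add: lookup_add smulW_add_left sum.distrib)
  also have "\<dots> = lin f p + lin f q"
    by (subst (1 2) lin_superset[where S = ?S]) auto
  finally show ?thesis .
qed

lemma lin_smulW: "lin f (smulW c p) = smulW c (lin f (p :: _ \<Rightarrow>\<^sub>0 'a::comm_semiring_1))"
proof -
  have "lin f (smulW c p) = (\<Sum>u\<in>Poly_Mapping.keys p. smulW (Poly_Mapping.lookup (smulW c p) u) (f u))"
    by (rule lin_superset) (auto simp: keys_smulW)
  then show ?thesis by (simp add: lin_def smulW_sum)
qed

lemma lin_zero [simp]: "lin f 0 = 0"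
  by (simp add: lin_def)

lemma lin_minus: "lin f (- p) = - lin f (p :: _ \<Rightarrow>\<^sub>0 'a::comm_ring_1)"
proof -
  have "lin f (- p) + lin f p = 0" by (simp add: lin_add[symmetric])
  then show ?thesis by (simp add: eq_neg_iff_add_eq_0)
qed
lemma lin_diff: "lin f (p - q) = lin f p - lin f (q :: _ \<Rightarrow>\<^sub>0 'a::comm_ring_1)"
  using lin_add[of f p "- q"] by (simp add: lin_minus)
lemma lin_sum: "lin f (\<Sum>i\<in>I. g i) = (\<Sum>i\<in>I. lin f (g i))"
  by (induction I rule: infinite_finite_induct) (simp_all add: lin_add)

lemma lin_single: "lin f (Poly_Mapping.single w c) = smulW c (f w)"
  by (cases "c = 0") (simp_all add: lin_def)
lemma lin_wd [simp]: "lin f (wd w) = (f w :: _ \<Rightarrow>\<^sub>0 'a::comm_semiring_1)"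
  by (simp add: wd_def lin_single)

lemma lin_cong: "(\<And>u. u \<in> Poly_Mapping.keys p \<Longrightarrow> f u = g u) \<Longrightarrow> lin f p = lin g p"
  by (simp add: lin_def)

lemma lin_fun_add: "lin (\<lambda>u. f u + g u) p = lin f p + lin g p"
  by (simp add: lin_def smulW_add sum.distrib)
lemma lin_fun_diff: "lin (\<lambda>u. f u - g u) p = lin f p - lin g (p :: _ \<Rightarrow>\<^sub>0 'a::comm_ring_1)"
  by (simp add: lin_def smulW_diff sum_subtractf)
lemma lin_fun_smulW: "lin (\<lambda>u. smulW c (f u)) p = smulW c (lin f (p :: _ \<Rightarrow>\<^sub>0 'a::comm_semiring_1))"
  by (simp add: lin_def smulW_sum mult.commute)
lemma lin_fun_zero [simp]: "lin (\<lambda>u. 0) p = 0"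
  by (simp add: lin_def)

lemma keys_lin: "Poly_Mapping.keys (lin f p) \<subseteq> (\<Union>u\<in>Poly_Mapping.keys p. Poly_Mapping.keys (f u))"
  unfolding lin_def using keys_sum_sub keys_smulW by fastforce

lemma lin_expand: "lin wd p = (p :: _ \<Rightarrow>\<^sub>0 'a::comm_semiring_1)"
proof (rule poly_mapping_eqI)
  fix v
  have "Poly_Mapping.lookup (lin wd p) v = (\<Sum>u\<in>Poly_Mapping.keys p. Poly_Mapping.lookup p u * (if v = u then 1 else 0))"
    by (simp add: lin_def lookup_sum lookup_wd)
  also have "\<dots> = Poly_Mapping.lookup p v"
    by (simp add: in_keys_iff if_distrib cong: if_cong)
  finally show "Poly_Mapping.lookup (lin wd p) v = Poly_Mapping.lookup p v" .
qed

definition linW :: "((word \<Rightarrow>\<^sub>0 'a::comm_semiring_1) \<Rightarrow> (word \<Rightarrow>\<^sub>0 'a)) \<Rightarrow> bool" where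
  "linW F \<longleftrightarrow> (\<forall>p q. F (p + q) = F p + F q) \<and> (\<forall>c p. F (smulW c p) = smulW c (F p))"

lemma linW_lin: "linW (lin f)"
  by (simp add: linW_def lin_add lin_smulW)

lemma linW_add: "linW F \<Longrightarrow> F (p + q) = F p + F q"
  by (simp add: linW_def)
lemma linW_smulW: "linW F \<Longrightarrow> F (smulW c p) = smulW c (F p)"
  by (simp add: linW_def)
lemma linW_zero: "linW F \<Longrightarrow> F 0 = 0"
  using linW_smulW[of F 0 0] by simp
lemma linW_sum: "linW F \<Longrightarrow> F (sum g I) = (\<Sum>i\<in>I. F (g i))"
  by (induction I rule: infinite_finite_induct) (simp_all add: linW_zero linW_add)
lemma linW_minus: "linW F \<Longrightarrow> F (- p) = - F (p :: _ \<Rightarrow>\<^sub>0 'a::comm_ring_1)"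
proof -
  assume F: "linW F"
  have "F (- p) + F p = 0" using linW_add[OF F, of "-p" p, symmetric] linW_zero[OF F] by simp
  then show ?thesis by (simp add: eq_neg_iff_add_eq_0)
qed
lemma linW_diff: "linW F \<Longrightarrow> F (p - q) = F p - F (q :: _ \<Rightarrow>\<^sub>0 'a::comm_ring_1)"
  using linW_add[of F p "- q"] by (simp add: linW_minus)

lemma linW_eq_lin: assumes "linW F" shows "F p = lin (\<lambda>w. F (wd w)) p"
proof -
  have "F p = F (lin wd p)" by (simp add: lin_expand)
  also have "\<dots> = lin (\<lambda>w. F (wd w)) p"
    unfolding lin_def by (simp add: linW_sum[OF assms] linW_smulW[OF assms])
  finally show ?thesis .
qed

lemma linW_eqI:
  assumes "linW F" "linW G" "\<And>w. w \<in> Poly_Mapping.keys p \<Longrightarrow> F (wd w) = G (wd w)"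
  shows "F p = G p"
  using linW_eq_lin[OF assms(1), of p] linW_eq_lin[OF assms(2), of p] lin_cong[of p "\<lambda>w. F (wd w)" "\<lambda>w. G (wd w)"] assms(3)
  by simp

lemma linW_comp: "linW F \<Longrightarrow> linW G \<Longrightarrow> linW (\<lambda>p. F (G p))"
  by (simp add: linW_def)
lemma linW_id: "linW (\<lambda>p. p)"
  by (simp add: linW_def)
lemma linW_plus: "linW F \<Longrightarrow> linW G \<Longrightarrow> linW (\<lambda>p. F p + G p)"
  by (simp add: linW_def smulW_add add_ac)
lemma linW_minus_fun: "linW F \<Longrightarrow> linW G \<Longrightarrow> linW (\<lambda>p. F p - (G p :: _ \<Rightarrow>\<^sub>0 'a::comm_ring_1))"
  by (simp add: linW_def smulW_diff)
lemma linW_smul_fun: "linW F \<Longrightarrow> linW (\<lambda>p. smulW c (F p :: _ \<Rightarrow>\<^sub>0 'a::comm_semiring_1))"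
  by (simp add: linW_def smulW_add mult.commute)
lemma linW_smul_id: "linW (smulW (c :: 'a::comm_semiring_1))"
  by (simp add: linW_def smulW_add mult.commute)

lemma preW_lin: "preW u (p :: _ \<Rightarrow>\<^sub>0 'a::comm_semiring_1) = lin (\<lambda>w. wd (u @ w)) p"
  by (simp add: preW_def lin_def smulW_wd)
lemma sufW_lin: "sufW u (p :: _ \<Rightarrow>\<^sub>0 'a::comm_semiring_1) = lin (\<lambda>w. wd (w @ u)) p"
  by (simp add: sufW_def lin_def smulW_wd)

lemma linW_preW: "linW (preW u :: _ \<Rightarrow> _ \<Rightarrow>\<^sub>0 'a::comm_semiring_1)"
  unfolding preW_lin[abs_def] by (rule linW_lin)
lemma linW_sufW: "linW (sufW u :: _ \<Rightarrow> _ \<Rightarrow>\<^sub>0 'a::comm_semiring_1)"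
  unfolding sufW_lin[abs_def] by (rule linW_lin)

lemma preW_wd [simp]: "preW u (wd w) = (wd (u @ w) :: _ \<Rightarrow>\<^sub>0 'a::comm_semiring_1)"
  by (simp add: preW_lin)
lemma sufW_wd [simp]: "sufW u (wd w) = (wd (w @ u) :: _ \<Rightarrow>\<^sub>0 'a::comm_semiring_1)"
  by (simp add: sufW_lin)

lemmas preW_add = linW_add[OF linW_preW]
lemmas preW_smulW = linW_smulW[OF linW_preW]
lemmas preW_diff = linW_diff[OF linW_preW]
lemmas preW_zero = linW_zero[OF linW_preW]
lemmas sufW_add = linW_add[OF linW_sufW]
lemmas sufW_smulW = linW_smulW[OF linW_sufW]
lemmas sufW_diff = linW_diff[OF linW_sufW]
lemmas sufW_zero = linW_zero[OF linW_sufW]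

lemma preW_preW: "preW u (preW v p) = preW (u @ v) (p :: _ \<Rightarrow>\<^sub>0 'a::comm_semiring_1)"
  by (rule linW_eqI[OF linW_comp[OF linW_preW linW_preW] linW_preW]) simp
lemma preW_Nil [simp]: "preW [] p = (p :: _ \<Rightarrow>\<^sub>0 'a::comm_semiring_1)"
  by (rule linW_eqI[OF linW_preW linW_id]) simp
lemma sufW_preW: "sufW u (preW v p) = preW v (sufW u (p :: _ \<Rightarrow>\<^sub>0 'a::comm_semiring_1))"
  by (rule linW_eqI[OF linW_comp[OF linW_sufW linW_preW] linW_comp[OF linW_preW linW_sufW]]) simp

lemma keys_preW: "Poly_Mapping.keys (preW u (p :: _ \<Rightarrow>\<^sub>0 'a::comm_semiring_1)) \<subseteq> (\<lambda>w. u @ w) ` Poly_Mapping.keys p"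
proof -
  have "Poly_Mapping.keys (preW u p) \<subseteq> (\<Union>w\<in>Poly_Mapping.keys p. Poly_Mapping.keys (wd (u @ w) :: _ \<Rightarrow>\<^sub>0 'a))"
    unfolding preW_lin by (rule keys_lin)
  then show ?thesis using keys_wd by blast
qed
lemma keys_sufW: "Poly_Mapping.keys (sufW u (p :: _ \<Rightarrow>\<^sub>0 'a::comm_semiring_1)) \<subseteq> (\<lambda>w. w @ u) ` Poly_Mapping.keys p"
proof -
  have "Poly_Mapping.keys (sufW u p) \<subseteq> (\<Union>w\<in>Poly_Mapping.keys p. Poly_Mapping.keys (wd (w @ u) :: _ \<Rightarrow>\<^sub>0 'a))"
    unfolding sufW_lin by (rule keys_lin)
  then show ?thesis using keys_wd by blast
qed

lemma bilin_lin: "bilin B p q = lin (\<lambda>u. lin (B u) q) (p :: _ \<Rightarrow>\<^sub>0 'a::comm_semiring_1)"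
  by (simp add: bilin_def lin_def smulW_sum)

lemma linW_bilin1: "linW (\<lambda>p. bilin B p q :: _ \<Rightarrow>\<^sub>0 'a::comm_semiring_1)"
  unfolding bilin_lin by (rule linW_lin)
lemma linW_bilin2: "linW (bilin B p :: _ \<Rightarrow> _ \<Rightarrow>\<^sub>0 'a::comm_semiring_1)"
  unfolding bilin_lin linW_def by (simp add: lin_add lin_smulW lin_fun_add lin_fun_smulW)

lemma bilin_wd [simp]: "bilin B (wd u) (wd v) = (B u v :: _ \<Rightarrow>\<^sub>0 'a::comm_semiring_1)"
  by (simp add: bilin_lin)

lemma bilin_eqI:
  assumes "\<And>q. linW (\<lambda>p. F p q)" "\<And>p. linW (F p)" "\<And>q. linW (\<lambda>p. G p q)" "\<And>p. linW (G p)"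
    and "\<And>u v. u \<in> Poly_Mapping.keys p \<Longrightarrow> v \<in> Poly_Mapping.keys q \<Longrightarrow> F (wd u) (wd v) = G (wd u) (wd v)"
  shows "F p q = G p q"
proof (rule linW_eqI[where F = "\<lambda>p. F p q" and G = "\<lambda>p. G p q"])
  fix u assume u: "u \<in> Poly_Mapping.keys p"
  show "F (wd u) q = G (wd u) q"
    by (rule linW_eqI[OF assms(2) assms(4)]) (use u assms(5) in auto)
qed (use assms in auto)

abbreviation tt :: "'k::comm_ring_1 poly" where "tt \<equiv> [:0, 1:]"

definition sigA :: "letter \<Rightarrow> (word \<Rightarrow>\<^sub>0 'k::comm_ring_1 poly) \<Rightarrow> (word \<Rightarrow>\<^sub>0 'k poly)" where
  "sigA a P = preW [a] P + (if a = Y then smulW tt (preW [X] P) else 0)"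

lemma sigA_X [simp]: "sigA X P = preW [X] P"
  by (simp add: sigA_def)
lemma sigA_Y [simp]: "sigA Y P = preW [Y] P + smulW tt (preW [X] P)"
  by (simp add: sigA_def)

lemma sigA_X_fun: "sigA X = preW [X]"
  by (rule ext) simp
lemma sigA_Y_fun: "sigA Y = (\<lambda>P. preW [Y] P + smulW tt (preW [X] P))"
  by (rule ext) simp
lemma linW_sigA: "linW (sigA a)"
  by (cases a) (simp_all only: sigA_X_fun sigA_Y_fun linW_preW linW_plus linW_smul_fun)

lemma sigW_Cons: "sigW (a # w) = sigA a (sigW w)"
  by (cases a) simp_all

lemma sufW_sigA: "sufW u (sigA a P) = sigA a (sufW u P)"
  by (cases a) (simp_all add: sufW_add sufW_smulW sufW_preW)

lemma StW_single [simp]: "StW [a] = wd [a]"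
  by (simp add: StW_def)

lemma StW_Nil [simp]: "StW [] = wd []"
  by (simp add: StW_def)

lemma StW_Cons: "w \<noteq> [] \<Longrightarrow> StW (a # w) = sigA a (StW w)"
  by (simp add: StW_def sigW_Cons sufW_sigA)

lemma linW_St: "linW St"
  unfolding St_def[abs_def] by (rule linW_lin)

lemma St_wd [simp]: "St (wd w) = StW w"
  by (simp add: St_def)

lemmas St_add = linW_add[OF linW_St]
lemmas St_smulW = linW_smulW[OF linW_St]
lemmas St_diff = linW_diff[OF linW_St]
lemmas St_zero = linW_zero[OF linW_St]

lemma St_preW1:
  assumes "[] \<notin> Poly_Mapping.keys R"
  shows "St (preW [a] R) = sigA a (St R)"
proof (rule linW_eqI[OF linW_comp[OF linW_St linW_preW] linW_comp[OF linW_sigA linW_St]])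
  fix w assume "w \<in> Poly_Mapping.keys R"
  then have "w \<noteq> []" using assms by auto
  then show "St (preW [a] (wd w)) = sigA a (St (wd w))" by (simp add: StW_Cons)
qed

section \<open>Shuffle at tau = 0\<close>

abbreviation SH :: "(word \<Rightarrow>\<^sub>0 'k::comm_ring_1 poly) \<Rightarrow> (word \<Rightarrow>\<^sub>0 'k poly) \<Rightarrow> (word \<Rightarrow>\<^sub>0 'k poly)" where
  "SH \<equiv> shuffle"

lemma rhoW_0 [simp]: "rhoW 0 a w = 0"
  by (cases a) (simp_all add: rhoW_def)

lemma shW0_Nil2 [simp]: "shW tau u [] = wd u"
  by (cases u) simp_all

lemma linW_SH1: "linW (\<lambda>p. SH p q)"
  unfolding shuffle_def by (rule linW_bilin1)
lemma linW_SH2: "linW (SH p)"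
  unfolding shuffle_def by (rule linW_bilin2)

lemma SH_wd [simp]: "SH (wd u) (wd v) = shW 0 u v"
  by (simp add: shuffle_def)

lemma SH_Nil1: "SH (wd []) B = B"
  by (rule linW_eqI[OF linW_SH2 linW_id]) simp
lemma SH_Nil2: "SH A (wd []) = A"
  by (rule linW_eqI[OF linW_SH1 linW_id]) simp

lemma SH_rec: "SH (preW [a] A) (preW [b] B) = preW [a] (SH A (preW [b] B)) + preW [b] (SH (preW [a] A) B)"
  by (rule bilin_eqI[where F = "\<lambda>A B. SH (preW [a] A) (preW [b] B)"])
     (simp_all add: linW_comp[OF linW_SH1 linW_preW] linW_comp[OF linW_SH2 linW_preW]
        linW_plus linW_comp[OF linW_preW linW_SH1] linW_comp[OF linW_preW linW_SH2]
        linW_comp[OF linW_preW linW_comp[OF linW_SH2 linW_preW]]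
        linW_comp[OF linW_preW linW_comp[OF linW_SH1 linW_preW]])

lemmas SH_add1 = linW_add[OF linW_SH1]
lemmas SH_add2 = linW_add[OF linW_SH2]
lemmas SH_smul1 = linW_smulW[OF linW_SH1]
lemmas SH_smul2 = linW_smulW[OF linW_SH2]

lemma SH_sig_pre: "SH (sigA a A) (preW [b] B) = sigA a (SH A (preW [b] B)) + preW [b] (SH (sigA a A) B)"
  by (cases a) (simp_all add: SH_add1 SH_smul1 SH_rec preW_add preW_smulW smulW_add add_ac)

lemma SH_pre_sig: "SH (preW [a] A) (sigA b B) = preW [a] (SH A (sigA b B)) + sigA b (SH (preW [a] A) B)"
  by (cases b) (simp_all add: SH_add2 SH_smul2 SH_rec preW_add preW_smulW smulW_add add_ac)

lemma SH_sig_sig: "SH (sigA a A) (sigA b B) = sigA a (SH A (sigA b B)) + sigA b (SH (sigA a A) B)"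
proof (cases b)
  case X then show ?thesis by (simp add: SH_sig_pre)
next
  case Y
  have lin: "linW (sigA a)" by (rule linW_sigA)
  show ?thesis using Y
    by (simp add: SH_add2 SH_smul2 SH_sig_pre linW_add[OF lin] linW_smulW[OF lin] preW_add preW_smulW smulW_add add_ac)
qed

lemma keys_shW_nonempty: "u \<noteq> [] \<or> v \<noteq> [] \<Longrightarrow> w \<in> Poly_Mapping.keys (shW tau u v) \<Longrightarrow> w \<noteq> []"
proof (induction tau u v arbitrary: w rule: shW.induct)
  case (1 tau w)
  then show ?case using keys_wd by fastforce
next
  case (2 tau a w1)
  then show ?case using keys_wd by fastforce
next
  case (3 tau a w1 b w2)
  let ?A = "preW [a] (shW tau w1 (b # w2))" and ?B = "preW [b] (shW tau (a # w1) w2)"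
  let ?C = "(if w1 = [] then rhoW tau a (b # w2) else 0)" and ?D = "(if w2 = [] then rhoW tau b (a # w1) else 0)"
  have "w \<in> Poly_Mapping.keys (?A + ?B - ?C - ?D)"
    using 3(4) by (simp only: shW.simps)
  then have "w \<in> Poly_Mapping.keys ?A \<union> Poly_Mapping.keys ?B \<union> Poly_Mapping.keys ?C \<union> Poly_Mapping.keys ?D"
    using keys_add[of ?A ?B] keys_diff_sub[of "?A + ?B" ?C] keys_diff_sub[of "?A + ?B - ?C" ?D] by blast
  moreover have "Poly_Mapping.keys ?C \<subseteq> {X # b # w2}" "Poly_Mapping.keys ?D \<subseteq> {X # a # w1}"
    by (cases a; cases b; auto simp: rhoW_def)+
  ultimately show ?case using keys_preW[of "[a]" "shW tau w1 (b # w2)"] keys_preW[of "[b]" "shW tau (a # w1) w2"] by auto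
qed

lemma St_rho: "St (rhoW tt a (b # w)) = (if a = Y then smulW tt (preW [X] (StW (b # w))) else 0)"
proof -
  show ?thesis
    by (cases a) (simp_all add: rhoW_def smulW_wd[symmetric] St_smulW StW_Cons St_zero)
qed

lemma St_tshuffle_words: "St (shW tt u v) = SH (StW u) (StW v :: _ \<Rightarrow>\<^sub>0 'k::comm_ring_1 poly)"
proof (induction "tt :: 'k poly" u v rule: shW.induct)
  case (1 w)
  then show ?case by (simp add: SH_Nil1)
next
  case (2 a w1)
  then show ?case by (simp add: SH_Nil2)
next
  case (3 a w1 b w2)
  have ne1: "[] \<notin> Poly_Mapping.keys (shW (tt::'k poly) w1 (b # w2))" using keys_shW_nonempty by blast
  have ne2: "[] \<notin> Poly_Mapping.keys (shW (tt::'k poly) (a # w1) w2)" using keys_shW_nonempty by blast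
  have e: "St (shW tt (a # w1) (b # w2)) = sigA a (SH (StW w1) (StW (b # w2))) + sigA b (SH (StW (a # w1)) (StW w2))
      - St (if w1 = [] then rhoW (tt::'k poly) a (b # w2) else 0) - St (if w2 = [] then rhoW (tt::'k poly) b (a # w1) else 0)"
    by (simp add: St_diff St_add St_preW1[OF ne1] St_preW1[OF ne2] 3)
  show ?case
  proof (cases "w1 = []")
    case True note w1 = this
    show ?thesis
    proof (cases "w2 = []")
      case True
      show ?thesis using w1 True
        by (cases a; cases b) (simp_all add: e St_rho StW_Cons SH_Nil1 SH_Nil2 smulW_wd[symmetric] rhoW_def St_add St_diff St_smulW
             preW_add preW_smulW SH_add1 SH_add2 SH_smul1 SH_smul2 algebra_simps)
    next
      case False
      have "SH (StW [a]) (StW (b # w2)) = SH (preW [a] (wd [])) (sigA b (StW w2))"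
        using False by (simp add: StW_Cons)
      also have "\<dots> = preW [a] (SH (wd []) (sigA b (StW w2))) + sigA b (SH (preW [a] (wd [])) (StW w2))"
        by (rule SH_pre_sig)
      also have "\<dots> = preW [a] (StW (b # w2)) + sigA b (SH (StW [a]) (StW w2))"
        by (simp add: SH_Nil1 StW_Cons False)
      finally have eq: "SH (StW [a]) (StW (b # w2)) = preW [a] (StW (b # w2)) + sigA b (SH (StW [a]) (StW w2))" .
      show ?thesis unfolding e using eq w1 False
        by (cases a) (simp_all add: St_rho StW_Cons St_zero SH_Nil1, (rule sym, assumption)+)
    qed
  next
    case False note w1 = this
    show ?thesis
    proof (cases "w2 = []")
      case True
      have "SH (StW (a # w1)) (StW [b]) = SH (sigA a (StW w1)) (preW [b] (wd []))"
        using w1 by (simp add: StW_Cons)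
      also have "\<dots> = sigA a (SH (StW w1) (preW [b] (wd []))) + preW [b] (SH (sigA a (StW w1)) (wd []))"
        by (rule SH_sig_pre)
      also have "\<dots> = sigA a (SH (StW w1) (StW [b])) + preW [b] (StW (a # w1))"
        by (simp add: SH_Nil2 StW_Cons w1)
      finally have eq: "SH (StW (a # w1)) (StW [b]) = sigA a (SH (StW w1) (StW [b])) + preW [b] (StW (a # w1))" .
      show ?thesis unfolding e using eq w1 True
        by (cases b) (simp_all add: St_rho StW_Cons St_zero SH_Nil2, (rule sym, assumption)+)
    next
      case False
      show ?thesis unfolding e using w1 False by (simp add: StW_Cons SH_sig_sig St_zero)
    qed
  qed
qed

definition h1w :: "word \<Rightarrow> bool" where "h1w w \<longleftrightarrow> w = [] \<or> last w = Y"
definition h0w :: "word \<Rightarrow> bool" where "h0w w \<longleftrightarrow> w = [] \<or> (hd w = X \<and> last w = Y)"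

lemma zsaux_rep: "zsaux j (replicate n X @ w) = zsaux (j + n) w"
  by (induction n arbitrary: j) simp_all

lemma zs_zw: "k \<ge> 1 \<Longrightarrow> zs (zw k @ w) = k # zs w"
  by (simp add: zs_def zw_def zsaux_rep)

lemma zs_Nil [simp]: "zs [] = []"
  by (simp add: zs_def)

lemma zsw_Cons [simp]: "zsw (k # ks) = zw k @ zsw ks"
  by (simp add: zsw_def)
lemma zsw_Nil [simp]: "zsw [] = []"
  by (simp add: zsw_def)

lemma zw_ne [simp]: "zw k \<noteq> []"
  by (simp add: zw_def)
lemma last_zw [simp]: "last (zw k) = Y"
  by (simp add: zw_def)

lemma zsw_ne [simp]: "zsw (k # ks) \<noteq> []"
  by simp

lemma zsw_h1: "zsw ks \<noteq> [] \<Longrightarrow> last (zsw ks) = Y"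
  by (induction ks) (auto simp: last_append)

lemma zsaux_zsw: "(w \<noteq> [] \<and> last w = Y) \<or> (w = [] \<and> j = 0) \<Longrightarrow> zsw (zsaux j w) = replicate j X @ w"
proof (induction w arbitrary: j)
  case Nil then show ?case by simp
next
  case (Cons a w)
  show ?case
  proof (cases a)
    case X
    then have "w \<noteq> [] \<and> last w = Y" using Cons.prems by (auto split: if_splits)
    then show ?thesis using Cons.IH[of "Suc j"] X by (simp add: replicate_app_Cons_same)
  next
    case Y
    have "(w \<noteq> [] \<and> last w = Y) \<or> (w = [] \<and> (0::nat) = 0)" using Cons.prems by (auto split: if_splits)
    then show ?thesis using Cons.IH[of 0] Y by (simp add: zw_def)
  qed
qed

lemma zsw_zs: "h1w w \<Longrightarrow> zsw (zs w) = w"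
  unfolding zs_def h1w_def using zsaux_zsw[of w 0] by auto

lemma zsaux_pos: "k \<in> set (zsaux j w) \<Longrightarrow> k \<ge> 1"
  by (induction j w rule: zsaux.induct) auto

lemma rep_zw: "m \<ge> 1 \<Longrightarrow> replicate k X @ zw m = zw (k + m)"
  by (simp add: zw_def replicate_add[symmetric] add.commute)

lemma h1_decomp:
  assumes "h1w a" "a \<noteq> []"
  obtains m a' where "m \<ge> 1" "a = zw m @ a'" "h1w a'"
proof -
  obtain m ms where zsa: "zs a = m # ms"
    using assms zsw_zs[OF assms(1)] by (cases "zs a") auto
  have "m \<ge> 1" using zsa zsaux_pos[of m 0 a] by (simp add: zs_def)
  moreover have "a = zw m @ zsw ms" using zsw_zs[OF assms(1)] zsa by simp
  moreover have "h1w (zsw ms)" using zsw_h1 h1w_def by auto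
  ultimately show ?thesis using that by blast
qed

section \<open>Harmonic product at tau = 0\<close>

abbreviation HA :: "(word \<Rightarrow>\<^sub>0 'a::comm_ring_1) \<Rightarrow> (word \<Rightarrow>\<^sub>0 'a) \<Rightarrow> (word \<Rightarrow>\<^sub>0 'a)" where
  "HA \<equiv> harmonic"

abbreviation Zk :: "nat \<Rightarrow> (word \<Rightarrow>\<^sub>0 'a::comm_ring_1) \<Rightarrow> (word \<Rightarrow>\<^sub>0 'a)" where
  "Zk k \<equiv> preW (zw k)"
abbreviation Xk :: "nat \<Rightarrow> (word \<Rightarrow>\<^sub>0 'a::comm_ring_1) \<Rightarrow> (word \<Rightarrow>\<^sub>0 'a)" where
  "Xk k \<equiv> preW (replicate k X)"

lemma hsZ_Nil2 [simp]: "hsZ tau u [] = wd (zsw u)"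
  by (cases u) simp_all

lemma hsW_rec:
  assumes "k \<ge> 1" "l \<ge> 1"
  shows "hsW (0::'a::comm_ring_1) (zw k @ a) (zw l @ b) = Zk k (hsW 0 a (zw l @ b)) + Zk l (hsW 0 (zw k @ a) b) + Zk (k + l) (hsW 0 a b)"
  using assms by (simp add: hsW_def zs_zw)

lemma linW_HA1: "linW (\<lambda>p. HA p q)"
  unfolding harmonic_def by (rule linW_bilin1)
lemma linW_HA2: "linW (HA p)"
  unfolding harmonic_def by (rule linW_bilin2)
lemmas HA_add1 = linW_add[OF linW_HA1]
lemmas HA_add2 = linW_add[OF linW_HA2]
lemmas HA_smul1 = linW_smulW[OF linW_HA1]
lemmas HA_smul2 = linW_smulW[OF linW_HA2]
lemmas HA_diff1 = linW_diff[OF linW_HA1]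
lemmas HA_diff2 = linW_diff[OF linW_HA2]

lemma HA_wd [simp]: "HA (wd u) (wd v) = (hsW 0 u v :: _ \<Rightarrow>\<^sub>0 'a::comm_ring_1)"
  by (simp add: harmonic_def)

lemma linW_pre_comp: "linW G \<Longrightarrow> linW (\<lambda>p. preW u (G p))"
  by (rule linW_comp[OF linW_preW])
lemma linW_HA1_comp: "linW G \<Longrightarrow> linW (\<lambda>p. HA (G p) q)"
  by (rule linW_comp[OF linW_HA1])
lemma linW_HA2_comp: "linW G \<Longrightarrow> linW (\<lambda>p. HA q (G p))"
  by (rule linW_comp[OF linW_HA2])
lemma linW_id': "linW (\<lambda>p. p)" by (rule linW_id)

lemmas linW_intros = linW_plus linW_minus_fun linW_pre_comp linW_HA1_comp linW_HA2_comp linW_id'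

lemma HA_rec:
  assumes "k \<ge> 1" "l \<ge> 1"
  shows "HA (Zk k A) (Zk l B) = Zk k (HA A (Zk l B)) + Zk l (HA (Zk k A) B) + Zk (k + l) (HA A (B :: _ \<Rightarrow>\<^sub>0 'a::comm_ring_1))"
  by (rule bilin_eqI[where F = "\<lambda>A B. HA (Zk k A) (Zk l B)" and
        G = "\<lambda>A B. Zk k (HA A (Zk l B)) + Zk l (HA (Zk k A) B) + Zk (k + l) (HA A B)"])
     (auto intro!: linW_intros simp: hsW_rec[OF assms])

lemma HA_Nil1: "(\<And>w. w \<in> Poly_Mapping.keys B \<Longrightarrow> h1w w) \<Longrightarrow> HA (wd []) B = (B :: _ \<Rightarrow>\<^sub>0 'a::comm_ring_1)"
  by (rule linW_eqI[OF linW_HA2 linW_id]) (simp add: hsW_def zsw_zs)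

lemma HA_Nil2: "(\<And>w. w \<in> Poly_Mapping.keys A \<Longrightarrow> h1w w) \<Longrightarrow> HA A (wd []) = (A :: _ \<Rightarrow>\<^sub>0 'a::comm_ring_1)"
  by (rule linW_eqI[OF linW_HA1 linW_id]) (simp add: hsW_def zsw_zs)

lemma XZ: "m \<ge> 1 \<Longrightarrow> Xk k (Zk m A) = Zk (k + m) (A :: _ \<Rightarrow>\<^sub>0 'a::comm_ring_1)"
  by (simp add: preW_preW rep_zw)
lemma XX: "Xk k (Xk m A) = Xk (k + m) (A :: _ \<Rightarrow>\<^sub>0 'a::comm_ring_1)"
  by (simp add: preW_preW replicate_add)

lemma I1_core:
  assumes "m \<ge> 1" "n \<ge> 1"
  shows "HA (Zk (k + m) A') (Zk (l + n) B') = Xk k (HA (Zk m A') (Zk (l + n) B')) + Xk l (HA (Zk (k + m) A') (Zk n B'))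
      - Xk (k + l) (HA (Zk m A') (Zk n (B' :: _ \<Rightarrow>\<^sub>0 'a::comm_ring_1)))"
  using assms by (simp add: HA_rec preW_add preW_diff preW_preW rep_zw add_ac)

lemma I2_core:
  assumes "m \<ge> 1" "l \<ge> 1"
  shows "HA (Zk (k + m) A') (Zk l B) = Xk k (HA (Zk m A') (Zk l B)) + Zk l (HA (Zk (k + m) A') B)
      - Zk (k + l) (HA (Zk m A') (B :: _ \<Rightarrow>\<^sub>0 'a::comm_ring_1))"
  using assms by (simp add: HA_rec preW_add preW_diff preW_preW rep_zw add_ac)

lemma I3_core:
  assumes "k \<ge> 1" "n \<ge> 1"
  shows "HA (Zk k A) (Zk (l + n) B') = Zk k (HA A (Zk (l + n) B')) + Xk l (HA (Zk k A) (Zk n B'))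
      - Zk (k + l) (HA A (Zk n (B' :: _ \<Rightarrow>\<^sub>0 'a::comm_ring_1)))"
  using assms by (simp add: HA_rec preW_add preW_diff preW_preW rep_zw add_ac)

definition h1p :: "word \<Rightarrow> bool" where "h1p w \<longleftrightarrow> w \<noteq> [] \<and> last w = Y"

lemma h1p_decomp:
  assumes "h1p a"
  obtains m a' where "m \<ge> 1" "wd a = Zk m (wd a' :: _ \<Rightarrow>\<^sub>0 'a::comm_ring_1)"
proof -
  have "h1w a" "a \<noteq> []" using assms by (auto simp: h1p_def h1w_def)
  then obtain m a' where "m \<ge> 1" "a = zw m @ a'" by (rule h1_decomp)
  then show ?thesis using that by simp
qed

lemma I1:
  assumes "\<And>w. w \<in> Poly_Mapping.keys A \<Longrightarrow> h1p w" "\<And>w. w \<in> Poly_Mapping.keys B \<Longrightarrow> h1p w"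
  shows "HA (Xk k A) (Xk l B) = Xk k (HA A (Xk l B)) + Xk l (HA (Xk k A) B) - Xk (k + l) (HA A (B :: _ \<Rightarrow>\<^sub>0 'a::comm_ring_1))"
proof (rule bilin_eqI[where F = "\<lambda>A B. HA (Xk k A) (Xk l B)" and
        G = "\<lambda>A B. Xk k (HA A (Xk l B)) + Xk l (HA (Xk k A) B) - Xk (k + l) (HA A B)"])
  fix a b assume a: "a \<in> Poly_Mapping.keys A" and b: "b \<in> Poly_Mapping.keys B"
  obtain m a' where m: "m \<ge> 1" "wd a = Zk m (wd a' :: _ \<Rightarrow>\<^sub>0 'a)" using h1p_decomp assms(1)[OF a] by blast
  obtain n b' where n: "n \<ge> 1" "wd b = Zk n (wd b' :: _ \<Rightarrow>\<^sub>0 'a)" using h1p_decomp assms(2)[OF b] by blast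
  show "HA (Xk k (wd a)) (Xk l (wd b)) = Xk k (HA (wd a) (Xk l (wd b))) + Xk l (HA (Xk k (wd a)) (wd b)) - Xk (k + l) (HA (wd a) (wd b :: _ \<Rightarrow>\<^sub>0 'a))"
    unfolding m(2) n(2) XZ[OF m(1)] XZ[OF n(1)] by (rule I1_core[OF m(1) n(1)])
qed (auto intro!: linW_intros)

lemma I2:
  assumes "\<And>w. w \<in> Poly_Mapping.keys A \<Longrightarrow> h1p w" "l \<ge> 1"
  shows "HA (Xk k A) (Zk l B) = Xk k (HA A (Zk l B)) + Zk l (HA (Xk k A) B) - Zk (k + l) (HA A (B :: _ \<Rightarrow>\<^sub>0 'a::comm_ring_1))"
proof (rule bilin_eqI[where F = "\<lambda>A B. HA (Xk k A) (Zk l B)" and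
        G = "\<lambda>A B. Xk k (HA A (Zk l B)) + Zk l (HA (Xk k A) B) - Zk (k + l) (HA A B)"])
  fix a b assume a: "a \<in> Poly_Mapping.keys A"
  obtain m a' where m: "m \<ge> 1" "wd a = Zk m (wd a' :: _ \<Rightarrow>\<^sub>0 'a)" using h1p_decomp assms(1)[OF a] by blast
  show "HA (Xk k (wd a)) (Zk l (wd b)) = Xk k (HA (wd a) (Zk l (wd b))) + Zk l (HA (Xk k (wd a)) (wd b)) - Zk (k + l) (HA (wd a) (wd b :: _ \<Rightarrow>\<^sub>0 'a))"
    unfolding m(2) XZ[OF m(1)] by (rule I2_core[OF m(1) assms(2)])
qed (auto intro!: linW_intros)

lemma I3:
  assumes "\<And>w. w \<in> Poly_Mapping.keys B \<Longrightarrow> h1p w" "k \<ge> 1"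
  shows "HA (Zk k A) (Xk l B) = Zk k (HA A (Xk l B)) + Xk l (HA (Zk k A) B) - Zk (k + l) (HA A (B :: _ \<Rightarrow>\<^sub>0 'a::comm_ring_1))"
proof (rule bilin_eqI[where F = "\<lambda>A B. HA (Zk k A) (Xk l B)" and
        G = "\<lambda>A B. Zk k (HA A (Xk l B)) + Xk l (HA (Zk k A) B) - Zk (k + l) (HA A B)"])
  fix a b assume b: "b \<in> Poly_Mapping.keys B"
  obtain n b' where n: "n \<ge> 1" "wd b = Zk n (wd b' :: _ \<Rightarrow>\<^sub>0 'a)" using h1p_decomp assms(1)[OF b] by blast
  show "HA (Zk k (wd a)) (Xk l (wd b)) = Zk k (HA (wd a) (Xk l (wd b))) + Xk l (HA (Zk k (wd a)) (wd b)) - Zk (k + l) (HA (wd a) (wd b :: _ \<Rightarrow>\<^sub>0 'a))"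
    unfolding n(2) XZ[OF n(1)] by (rule I3_core[OF assms(2) n(1)])
qed (auto intro!: linW_intros)

lemma keys_hsZ: "w \<in> Poly_Mapping.keys (hsZ tau ks ls) \<Longrightarrow> h1w w \<and> ((ks \<noteq> [] \<or> ls \<noteq> []) \<longrightarrow> w \<noteq> [])"
proof (induction tau ks ls arbitrary: w rule: hsZ.induct)
  case (1 tau v)
  then show ?case using keys_wd[of "zsw v"] zsw_h1[of v] by (cases v) (auto simp: h1w_def last_append)
next
  case (2 tau k u)
  then show ?case using keys_wd[of "zsw (k # u)"] zsw_h1[of "k # u"] by (auto simp: h1w_def last_append)
next
  case (3 tau k u l v)
  let ?A = "preW (zw k) (hsZ tau u (l # v))" and ?B = "preW (zw l) (hsZ tau (k # u) v)"
  let ?C = "smulW (1 - 2 * tau) (preW (zw (k + l)) (hsZ tau u v))"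
  let ?D = "(if u = [] \<and> v = [] then 0 else smulW (tau ^ 2 - tau) (preW (replicate (k + l) X) (hsZ tau u v)))"
  have "w \<in> Poly_Mapping.keys (?A + ?B + ?C + ?D)"
    using 3(5) by (simp only: hsZ.simps)
  then have "w \<in> Poly_Mapping.keys ?A \<union> Poly_Mapping.keys ?B \<union> Poly_Mapping.keys ?C \<union> Poly_Mapping.keys ?D"
    using keys_add[of ?A ?B] keys_add[of "?A + ?B" ?C] keys_add[of "?A + ?B + ?C" ?D] by blast
  then show ?case
  proof (elim UnE)
    assume "w \<in> Poly_Mapping.keys ?A"
    then obtain w' where "w = zw k @ w'" "w' \<in> Poly_Mapping.keys (hsZ tau u (l # v))" using keys_preW by blast
    then show ?thesis using 3(1)[of w'] by (auto simp: h1w_def last_append)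
  next
    assume "w \<in> Poly_Mapping.keys ?B"
    then obtain w' where "w = zw l @ w'" "w' \<in> Poly_Mapping.keys (hsZ tau (k # u) v)" using keys_preW by blast
    then show ?thesis using 3(2)[of w'] by (auto simp: h1w_def last_append)
  next
    assume "w \<in> Poly_Mapping.keys ?C"
    then have "w \<in> Poly_Mapping.keys (preW (zw (k + l)) (hsZ tau u v))" using keys_smulW by blast
    then obtain w' where "w = zw (k + l) @ w'" "w' \<in> Poly_Mapping.keys (hsZ tau u v)" using keys_preW by blast
    then show ?thesis using 3(3)[of w'] by (auto simp: h1w_def last_append)
  next
    assume w: "w \<in> Poly_Mapping.keys ?D"
    then have uv: "\<not> (u = [] \<and> v = [])" by auto
    then have "w \<in> Poly_Mapping.keys (smulW (tau ^ 2 - tau) (preW (replicate (k + l) X) (hsZ tau u v)))" using w uv by (auto split: if_splits)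
    then have "w \<in> Poly_Mapping.keys (preW (replicate (k + l) X) (hsZ tau u v))" using keys_smulW by blast
    then obtain w' where "w = replicate (k + l) X @ w'" "w' \<in> Poly_Mapping.keys (hsZ tau u v)" using keys_preW by blast
    then show ?thesis using 3(3)[of w'] uv by (auto simp: h1w_def last_append)
  qed
qed

lemma keys_sigW: "v \<in> Poly_Mapping.keys (sigW w :: _ \<Rightarrow>\<^sub>0 'k::comm_ring_1 poly) \<Longrightarrow> length v = length w \<and> (w \<noteq> [] \<longrightarrow> hd w = X \<longrightarrow> hd v = X)"
proof (induction w arbitrary: v rule: sigW.induct)
  case 1
  then show ?case using keys_wd[of "[]"] by auto
next
  case (2 w)
  then show ?case using keys_preW[of "[X]" "sigW w"] by fastforce
next
  case (3 w)
  have "v \<in> Poly_Mapping.keys (preW [Y] (sigW w :: _ \<Rightarrow>\<^sub>0 'k poly) + smulW tt (preW [X] (sigW w :: _ \<Rightarrow>\<^sub>0 'k poly)))"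
    using 3(3) by simp
  then have "v \<in> Poly_Mapping.keys (preW [Y] (sigW w :: _ \<Rightarrow>\<^sub>0 'k poly)) \<union> Poly_Mapping.keys (smulW tt (preW [X] (sigW w :: _ \<Rightarrow>\<^sub>0 'k poly)))"
    by (rule subsetD[OF keys_add])
  then have "v \<in> Poly_Mapping.keys (preW [Y] (sigW w :: _ \<Rightarrow>\<^sub>0 'k poly)) \<union> Poly_Mapping.keys (preW [X] (sigW w :: _ \<Rightarrow>\<^sub>0 'k poly))"
    using keys_smulW by blast
  then show ?case using keys_preW[of "[Y]" "sigW w :: _ \<Rightarrow>\<^sub>0 'k poly"] keys_preW[of "[X]" "sigW w :: _ \<Rightarrow>\<^sub>0 'k poly"] 3(1) by fastforce
qed

lemma keys_StW: "v \<in> Poly_Mapping.keys (StW w :: _ \<Rightarrow>\<^sub>0 'k::comm_ring_1 poly) \<Longrightarrow> w \<noteq> [] \<Longrightarrow>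
    length v = length w \<and> last v = last w \<and> (hd w = X \<longrightarrow> hd v = X)"
proof -
  assume v: "v \<in> Poly_Mapping.keys (StW w :: _ \<Rightarrow>\<^sub>0 'k poly)" and w: "w \<noteq> []"
  then have "v \<in> Poly_Mapping.keys (sufW [last w] (sigW (butlast w) :: _ \<Rightarrow>\<^sub>0 'k poly))" by (simp add: StW_def)
  then obtain v' where v': "v = v' @ [last w]" "v' \<in> Poly_Mapping.keys (sigW (butlast w) :: _ \<Rightarrow>\<^sub>0 'k poly)" using keys_sufW by blast
  have l: "length v' = length (butlast w)" and h: "butlast w \<noteq> [] \<longrightarrow> hd (butlast w) = X \<longrightarrow> hd v' = X"
    using keys_sigW[OF v'(2)] by auto
  have "hd w = X \<longrightarrow> hd v = X"
  proof (cases "butlast w = []")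
    case True
    then have "v' = []" using l by simp
    have "w = butlast w @ [last w]" using w by simp
    then have "w = [last w]" using True by simp
    then obtain a where "w = [a]" by blast
    then show ?thesis using v' \<open>v' = []\<close> by simp
  next
    case False
    then have "hd (butlast w) = hd w" by (cases w) auto
    moreover have "v' \<noteq> []" using l False by (metis length_0_conv)
    ultimately show ?thesis using h False v' by simp
  qed
  then show ?thesis using v' l w by simp
qed

lemma keys_St_sub: "Poly_Mapping.keys (St p :: _ \<Rightarrow>\<^sub>0 'k::comm_ring_1 poly) \<subseteq> (\<Union>w\<in>Poly_Mapping.keys p. Poly_Mapping.keys (StW w :: _ \<Rightarrow>\<^sub>0 'k::comm_ring_1 poly))"
  unfolding St_def by (rule keys_lin)

lemma StW_keys_Nil: "v \<in> Poly_Mapping.keys (StW [] :: _ \<Rightarrow>\<^sub>0 'k::comm_ring_1 poly) \<Longrightarrow> v = []"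
  using keys_wd[of "[]"] by auto

lemma St_h1p: "(\<And>w. w \<in> Poly_Mapping.keys p \<Longrightarrow> h1p w) \<Longrightarrow> v \<in> Poly_Mapping.keys (St p :: _ \<Rightarrow>\<^sub>0 'k::comm_ring_1 poly) \<Longrightarrow> h1p v"
  using keys_St_sub keys_StW unfolding h1p_def
  by (metis (no_types, lifting) UN_E length_0_conv subsetD)

lemma St_h1w: "(\<And>w. w \<in> Poly_Mapping.keys p \<Longrightarrow> h1w w) \<Longrightarrow> v \<in> Poly_Mapping.keys (St p :: _ \<Rightarrow>\<^sub>0 'k::comm_ring_1 poly) \<Longrightarrow> h1w v"
proof -
  assume p: "\<And>w. w \<in> Poly_Mapping.keys p \<Longrightarrow> h1w w" and v: "v \<in> Poly_Mapping.keys (St p :: _ \<Rightarrow>\<^sub>0 'k poly)"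
  then obtain w where w: "w \<in> Poly_Mapping.keys p" "v \<in> Poly_Mapping.keys (StW w :: _ \<Rightarrow>\<^sub>0 'k poly)" using keys_St_sub by blast
  show "h1w v"
  proof (cases "w = []")
    case True then show ?thesis using w keys_wd[of "[]"] by (auto simp: h1w_def last_append)
  next
    case False then show ?thesis using keys_StW[OF w(2)] p[OF w(1)] by (simp add: h1w_def)
  qed
qed

lemma St_h0w: "(\<And>w. w \<in> Poly_Mapping.keys p \<Longrightarrow> h0w w) \<Longrightarrow> v \<in> Poly_Mapping.keys (St p :: _ \<Rightarrow>\<^sub>0 'k::comm_ring_1 poly) \<Longrightarrow> h0w v"
proof -
  assume p: "\<And>w. w \<in> Poly_Mapping.keys p \<Longrightarrow> h0w w" and v: "v \<in> Poly_Mapping.keys (St p :: _ \<Rightarrow>\<^sub>0 'k poly)"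
  then obtain w where w: "w \<in> Poly_Mapping.keys p" "v \<in> Poly_Mapping.keys (StW w :: _ \<Rightarrow>\<^sub>0 'k poly)" using keys_St_sub by blast
  show "h0w v"
  proof (cases "w = []")
    case True then show ?thesis using w keys_wd[of "[]"] by (auto simp: h0w_def)
  next
    case False then show ?thesis using keys_StW[OF w(2)] p[OF w(1)] by (simp add: h0w_def)
  qed
qed

lemma StW_h1p: "h1p w \<Longrightarrow> v \<in> Poly_Mapping.keys (StW w :: _ \<Rightarrow>\<^sub>0 'k::comm_ring_1 poly) \<Longrightarrow> h1p v"
  using St_h1p[of "wd w" v] keys_wd[of w] by auto
lemma StW_h1w: "h1w w \<Longrightarrow> v \<in> Poly_Mapping.keys (StW w :: _ \<Rightarrow>\<^sub>0 'k::comm_ring_1 poly) \<Longrightarrow> h1w v"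
  using St_h1w[of "wd w" v] keys_wd[of w] by auto

lemma sigW_rep: "sigW (replicate n X) = wd (replicate n X)"
  by (induction n) simp_all

lemma StW_zw: "StW (zw k) = wd (zw k)"
  by (simp add: StW_def zw_def sigW_rep)

lemma St_Xk: "[] \<notin> Poly_Mapping.keys R \<Longrightarrow> St (Xk k R) = Xk k (St R)"
proof (induction k)
  case 0 then show ?case by simp
next
  case (Suc k)
  have "Xk (Suc k) R = preW [X] (Xk k R)" by (simp add: preW_preW)
  moreover have "[] \<notin> Poly_Mapping.keys (Xk k R)" using keys_preW[of "replicate k X" R] Suc.prems by auto
  ultimately have "St (Xk (Suc k) R) = sigA X (St (Xk k R))" using St_preW1 by metis
  then show ?case using Suc by (simp add: preW_preW)
qed

lemma St_Zk: "k \<ge> 1 \<Longrightarrow> [] \<notin> Poly_Mapping.keys R \<Longrightarrow> St (Zk k R) = Zk k (St R) + smulW tt (Xk k (St R))"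
proof -
  assume k: "k \<ge> 1" and R: "[] \<notin> Poly_Mapping.keys R"
  have e: "Zk k R = Xk (k - 1) (preW [Y] R)" by (simp add: preW_preW zw_def)
  have ne: "[] \<notin> Poly_Mapping.keys (preW [Y] R)" using keys_preW[of "[Y]" R] by auto
  have "St (Zk k R) = Xk (k - 1) (preW [Y] (St R) + smulW tt (preW [X] (St R)))"
    unfolding e St_Xk[OF ne] St_preW1[OF R] by simp
  also have "\<dots> = Zk k (St R) + smulW tt (Xk k (St R))"
  proof -
    obtain j where j: "k = Suc j" using k by (cases k) auto
    show ?thesis by (simp add: j preW_add preW_smulW preW_preW zw_def replicate_append_same)
  qed
  finally show ?thesis .
qed

lemma keys_Zk_h1w:
  assumes "\<And>w. w \<in> Poly_Mapping.keys A \<Longrightarrow> h1w w" "w \<in> Poly_Mapping.keys (Zk k (A :: _ \<Rightarrow>\<^sub>0 'a::comm_ring_1))"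
  shows "h1w w"
proof -
  obtain w' where "w = zw k @ w'" "w' \<in> Poly_Mapping.keys A" using assms(2) keys_preW by blast
  then show ?thesis using assms(1)[of w'] by (auto simp: h1w_def last_append)
qed

lemma alg_nn:
  fixes c :: "'a::comm_ring_1"
  assumes k: "k \<ge> 1" and l: "l \<ge> 1"
    and U: "\<And>w. w \<in> Poly_Mapping.keys SU \<Longrightarrow> h1p w" and V: "\<And>w. w \<in> Poly_Mapping.keys SV \<Longrightarrow> h1p w"
  shows "Zk k (HA SU (Zk l SV + smulW c (Xk l SV))) + smulW c (Xk k (HA SU (Zk l SV + smulW c (Xk l SV))))
    + (Zk l (HA (Zk k SU + smulW c (Xk k SU)) SV) + smulW c (Xk l (HA (Zk k SU + smulW c (Xk k SU)) SV)))
    + smulW (1 - 2 * c) (Zk (k + l) (HA SU SV) + smulW c (Xk (k + l) (HA SU SV)))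
    + smulW (c ^ 2 - c) (Xk (k + l) (HA SU SV))
    = HA (Zk k SU + smulW c (Xk k SU)) (Zk l SV + smulW c (Xk l (SV :: _ \<Rightarrow>\<^sub>0 'a)))"
proof -
  have r1: "HA (Zk k SU) (Zk l SV) = Zk k (HA SU (Zk l SV)) + Zk l (HA (Zk k SU) SV) + Zk (k + l) (HA SU SV)"
    by (rule HA_rec[OF k l])
  have r2: "HA (Zk k SU) (Xk l SV) = Zk k (HA SU (Xk l SV)) + Xk l (HA (Zk k SU) SV) - Zk (k + l) (HA SU SV)"
    by (rule I3[OF V k])
  have r3: "HA (Xk k SU) (Zk l SV) = Xk k (HA SU (Zk l SV)) + Zk l (HA (Xk k SU) SV) - Zk (k + l) (HA SU SV)"
    by (rule I2[OF U l])
  have r4: "HA (Xk k SU) (Xk l SV) = Xk k (HA SU (Xk l SV)) + Xk l (HA (Xk k SU) SV) - Xk (k + l) (HA SU SV)"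
    by (rule I1[OF U V])
  show ?thesis
    apply (simp add: HA_add1 HA_add2 HA_smul1 HA_smul2 r1 r2 r3 r4 preW_add preW_smulW preW_diff
        smulW_add smulW_diff)
    apply (rule poly_mapping_eqI)
    apply (simp add: lookup_add lookup_minus algebra_simps power2_eq_square)
    done
qed

lemma alg_en:
  fixes c :: "'a::comm_ring_1"
  assumes k: "k \<ge> 1" and l: "l \<ge> 1"
    and V: "\<And>w. w \<in> Poly_Mapping.keys SV \<Longrightarrow> h1p w"
  shows "Zk k (HA (wd []) (Zk l SV + smulW c (Xk l SV))) + smulW c (Xk k (HA (wd []) (Zk l SV + smulW c (Xk l SV))))
    + (Zk l (HA (Zk k (wd [])) SV) + smulW c (Xk l (HA (Zk k (wd [])) SV)))
    + smulW (1 - 2 * c) (Zk (k + l) (HA (wd []) SV) + smulW c (Xk (k + l) (HA (wd []) SV)))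
    + smulW (c ^ 2 - c) (Xk (k + l) (HA (wd []) SV))
    = HA (Zk k (wd [])) (Zk l SV + smulW c (Xk l (SV :: _ \<Rightarrow>\<^sub>0 'a)))"
proof -
  have V1: "\<And>w. w \<in> Poly_Mapping.keys SV \<Longrightarrow> h1w w" using V by (auto simp: h1p_def h1w_def)
  have e1: "HA (wd []) SV = SV" by (rule HA_Nil1[OF V1])
  have e2: "HA (wd []) (Zk l SV) = Zk l SV"
    by (rule HA_Nil1) (rule keys_Zk_h1w[OF V1])
  have e3: "HA (wd []) (Xk l SV) = Xk l SV"
    by (rule HA_Nil1) (use keys_preW[of "replicate l X" SV] V in \<open>auto simp: h1w_def h1p_def last_append\<close>)
  have r1: "HA (Zk k (wd [])) (Zk l SV) = Zk k (HA (wd []) (Zk l SV)) + Zk l (HA (Zk k (wd [])) SV) + Zk (k + l) (HA (wd []) SV)"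
    by (rule HA_rec[OF k l])
  have r2: "HA (Zk k (wd [])) (Xk l SV) = Zk k (HA (wd []) (Xk l SV)) + Xk l (HA (Zk k (wd [])) SV) - Zk (k + l) (HA (wd []) SV)"
    by (rule I3[OF V k])
  show ?thesis
    apply (simp del: preW_wd add: HA_add1 HA_add2 HA_smul1 HA_smul2 r1 r2 e1 e2 e3 preW_add preW_smulW preW_diff
        smulW_add smulW_diff preW_preW rep_zw[OF l] replicate_add[symmetric])
    apply (rule poly_mapping_eqI)
    apply (simp del: preW_wd add: lookup_add lookup_minus algebra_simps power2_eq_square)
    done
qed

lemma alg_ne:
  fixes c :: "'a::comm_ring_1"
  assumes k: "k \<ge> 1" and l: "l \<ge> 1"
    and U: "\<And>w. w \<in> Poly_Mapping.keys SU \<Longrightarrow> h1p w"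
  shows "Zk k (HA SU (Zk l (wd []))) + smulW c (Xk k (HA SU (Zk l (wd []))))
    + (Zk l (HA (Zk k SU + smulW c (Xk k SU)) (wd [])) + smulW c (Xk l (HA (Zk k SU + smulW c (Xk k SU)) (wd []))))
    + smulW (1 - 2 * c) (Zk (k + l) (HA SU (wd [])) + smulW c (Xk (k + l) (HA SU (wd []))))
    + smulW (c ^ 2 - c) (Xk (k + l) (HA SU (wd [])))
    = HA (Zk k SU + smulW c (Xk k SU)) (Zk l (wd [] :: _ \<Rightarrow>\<^sub>0 'a))"
proof -
  have U1: "\<And>w. w \<in> Poly_Mapping.keys SU \<Longrightarrow> h1w w" using U by (auto simp: h1p_def h1w_def)
  have e1: "HA SU (wd []) = SU" by (rule HA_Nil2[OF U1])
  have e2: "HA (Zk k SU) (wd []) = Zk k SU"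
    by (rule HA_Nil2) (rule keys_Zk_h1w[OF U1])
  have e3: "HA (Xk k SU) (wd []) = Xk k SU"
    by (rule HA_Nil2) (use keys_preW[of "replicate k X" SU] U in \<open>auto simp: h1w_def h1p_def last_append\<close>)
  have r1: "HA (Zk k SU) (Zk l (wd [])) = Zk k (HA SU (Zk l (wd []))) + Zk l (HA (Zk k SU) (wd [])) + Zk (k + l) (HA SU (wd []))"
    by (rule HA_rec[OF k l])
  have r2: "HA (Xk k SU) (Zk l (wd [])) = Xk k (HA SU (Zk l (wd []))) + Zk l (HA (Xk k SU) (wd [])) - Zk (k + l) (HA SU (wd []))"
    by (rule I2[OF U l])
  show ?thesis
    apply (simp del: preW_wd add: HA_add1 HA_add2 HA_smul1 HA_smul2 r1 r2 e1 e2 e3 preW_add preW_smulW preW_diff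
        smulW_add smulW_diff preW_preW rep_zw[OF k] replicate_add[symmetric])
    apply (rule poly_mapping_eqI)
    apply (simp del: preW_wd add: lookup_add lookup_minus algebra_simps power2_eq_square)
    done
qed

lemma alg_ee:
  fixes c :: "'a::comm_ring_1"
  assumes k: "k \<ge> 1" and l: "l \<ge> 1"
  shows "Zk k (HA (wd []) (Zk l (wd []))) + smulW c (Xk k (HA (wd []) (Zk l (wd []))))
    + (Zk l (HA (Zk k (wd [])) (wd [])) + smulW c (Xk l (HA (Zk k (wd [])) (wd []))))
    + smulW (1 - 2 * c) (Zk (k + l) (HA (wd []) (wd [])))
    = HA (Zk k (wd [])) (Zk l (wd [] :: _ \<Rightarrow>\<^sub>0 'a))"
proof -
  have e1: "HA (wd []) (wd []) = (wd [] :: _ \<Rightarrow>\<^sub>0 'a)" by (simp add: hsW_def)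
  have e2: "HA (Zk k (wd [])) (wd []) = (Zk k (wd []) :: _ \<Rightarrow>\<^sub>0 'a)"
    by (rule HA_Nil2) (rule keys_Zk_h1w[of "wd []"], use keys_wd[of "[]"] in \<open>auto simp: h1w_def\<close>)
  have e3: "HA (wd []) (Zk l (wd [])) = (Zk l (wd []) :: _ \<Rightarrow>\<^sub>0 'a)"
    by (rule HA_Nil1) (rule keys_Zk_h1w[of "wd []"], use keys_wd[of "[]"] in \<open>auto simp: h1w_def\<close>)
  have r1: "HA (Zk k (wd [])) (Zk l (wd [])) = Zk k (HA (wd []) (Zk l (wd []))) + Zk l (HA (Zk k (wd [])) (wd [])) + Zk (k + l) (HA (wd []) (wd [] :: _ \<Rightarrow>\<^sub>0 'a))"
    by (rule HA_rec[OF k l])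
  show ?thesis
    apply (simp only: r1 e1 e2 e3)
    apply (simp del: preW_wd add: preW_add preW_smulW preW_diff smulW_add smulW_diff preW_preW rep_zw[OF k] rep_zw[OF l])
    apply (rule poly_mapping_eqI)
    apply (simp del: preW_wd add: lookup_add lookup_minus algebra_simps add.commute)
    done
qed

lemma zsw_h1w: "h1w (zsw ks)"
  using zsw_h1[of ks] by (auto simp: h1w_def)
lemma zsw_h1p: "ks \<noteq> [] \<Longrightarrow> h1p (zsw ks)"
  using zsw_h1[of ks] by (cases ks) (auto simp: h1p_def)

lemma StW_zsw_Cons:
  assumes k: "k \<ge> 1"
  shows "StW (zsw (k # u)) = Zk k (StW (zsw u)) + (if u = [] then 0 else smulW tt (Xk k (StW (zsw u) :: _ \<Rightarrow>\<^sub>0 'k::comm_ring_1 poly)))"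
proof (cases "u = []")
  case True
  then show ?thesis by (simp add: StW_zw)
next
  case False
  then have ne: "zsw u \<noteq> []" by (cases u) auto
  have "StW (zsw (k # u)) = St (Zk k (wd (zsw u)) :: _ \<Rightarrow>\<^sub>0 'k poly)" by simp
  also have "\<dots> = Zk k (StW (zsw u)) + smulW tt (Xk k (StW (zsw u)))"
  proof -
    have "[] \<notin> Poly_Mapping.keys (wd (zsw u) :: _ \<Rightarrow>\<^sub>0 'k poly)" using ne by (simp add: in_keys_iff lookup_wd)
    from St_Zk[OF k this] show ?thesis by simp
  qed
  finally show ?thesis using False by simp
qed

lemma St_hsZ:
  "(\<forall>x\<in>set ks. x \<ge> 1) \<Longrightarrow> (\<forall>x\<in>set ls. x \<ge> 1) \<Longrightarrow>
    St (hsZ tt ks ls) = HA (StW (zsw ks)) (StW (zsw ls) :: _ \<Rightarrow>\<^sub>0 'k::comm_ring_1 poly)"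
proof (induction "tt :: 'k poly" ks ls rule: hsZ.induct)
  case (1 v)
  have "\<And>w. w \<in> Poly_Mapping.keys (StW (zsw v) :: _ \<Rightarrow>\<^sub>0 'k poly) \<Longrightarrow> h1w w"
    using StW_h1w[OF zsw_h1w] by blast
  then show ?case by (simp add: HA_Nil1)
next
  case (2 k u)
  have "\<And>w. w \<in> Poly_Mapping.keys (StW (zsw (k # u)) :: _ \<Rightarrow>\<^sub>0 'k poly) \<Longrightarrow> h1w w"
    using StW_h1w[OF zsw_h1w] by blast
  then show ?case by (simp add: HA_Nil2)
next
  case (3 k u l v)
  have k: "k \<ge> 1" and l: "l \<ge> 1" using 3(5,6) by auto
  have pu: "\<forall>x\<in>set u. x \<ge> 1" and pv: "\<forall>x\<in>set v. x \<ge> 1" using 3(5,6) by auto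
  define SU where "SU = (StW (zsw u) :: _ \<Rightarrow>\<^sub>0 'k poly)"
  define SV where "SV = (StW (zsw v) :: _ \<Rightarrow>\<^sub>0 'k poly)"
  define T1 where "T1 = hsZ (tt :: 'k poly) u (l # v)"
  define T2 where "T2 = hsZ (tt :: 'k poly) (k # u) v"
  define T3 where "T3 = hsZ (tt :: 'k poly) u v"
  have KU: "StW (zsw (k # u)) = Zk k SU + (if u = [] then 0 else smulW tt (Xk k SU))"
    unfolding SU_def by (rule StW_zsw_Cons[OF k])
  have LV: "StW (zsw (l # v)) = Zk l SV + (if v = [] then 0 else smulW tt (Xk l SV))"
    unfolding SV_def by (rule StW_zsw_Cons[OF l])
  have IH1: "St T1 = HA SU (StW (zsw (l # v)))" unfolding T1_def SU_def using 3(1) pu 3(6) by simp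
  have IH2: "St T2 = HA (StW (zsw (k # u))) SV" unfolding T2_def SV_def using 3(2) 3(5) pv by simp
  have IH3: "St T3 = HA SU SV" unfolding T3_def SU_def SV_def using 3(3) pu pv by simp
  have ne1: "[] \<notin> Poly_Mapping.keys T1" unfolding T1_def using keys_hsZ by blast
  have ne2: "[] \<notin> Poly_Mapping.keys T2" unfolding T2_def using keys_hsZ by blast
  have S1: "St (Zk k T1) = Zk k (St T1) + smulW tt (Xk k (St T1))" by (rule St_Zk[OF k ne1])
  have S2: "St (Zk l T2) = Zk l (St T2) + smulW tt (Xk l (St T2))" by (rule St_Zk[OF l ne2])
  have main: "St (hsZ tt (k # u) (l # v)) = St (Zk k T1) + St (Zk l T2) + smulW (1 - 2 * tt) (St (Zk (k + l) T3))
      + (if u = [] \<and> v = [] then 0 else smulW (tt ^ 2 - tt) (St (Xk (k + l) T3)))"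
    unfolding T1_def T2_def T3_def by (simp only: hsZ.simps St_add St_smulW if_distrib[of St] St_zero)
  have hU: "u \<noteq> [] \<Longrightarrow> (\<And>w. w \<in> Poly_Mapping.keys SU \<Longrightarrow> h1p w)"
    unfolding SU_def using StW_h1p[OF zsw_h1p] by blast
  have hV: "v \<noteq> [] \<Longrightarrow> (\<And>w. w \<in> Poly_Mapping.keys SV \<Longrightarrow> h1p w)"
    unfolding SV_def using StW_h1p[OF zsw_h1p] by blast
  show ?case
  proof (cases "u = []")
    case u: True
    have SUe: "SU = wd []" unfolding SU_def using u by simp
    show ?thesis
    proof (cases "v = []")
      case v: True
      have SVe: "SV = wd []" unfolding SV_def using v by simp
      have T3e: "T3 = wd []" unfolding T3_def using u v by simp
      have "St (Zk (k + l) T3) = Zk (k + l) (HA SU SV)"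
        unfolding T3e SUe SVe by (simp add: StW_zw hsW_def)
      then have "St (hsZ (tt :: 'k poly) (k # u) (l # v)) = Zk k (HA (wd []) (Zk l (wd []))) + smulW tt (Xk k (HA (wd []) (Zk l (wd []))))
        + (Zk l (HA (Zk k (wd [])) (wd [])) + smulW tt (Xk l (HA (Zk k (wd [])) (wd []))))
        + smulW (1 - 2 * tt) (Zk (k + l) (HA (wd []) (wd [])))"
        unfolding main using S1 S2 IH1 IH2 KU LV u v SUe SVe by (simp del: preW_wd HA_wd)
      also have "\<dots> = HA (Zk k (wd [])) (Zk l (wd []))" by (rule alg_ee[OF k l])
      finally show ?thesis using KU LV u v SUe SVe by (simp del: preW_wd HA_wd)
    next
      case v: False
      have ne3: "[] \<notin> Poly_Mapping.keys T3" unfolding T3_def using keys_hsZ v by blast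
      have S3: "St (Zk (k + l) T3) = Zk (k + l) (St T3) + smulW tt (Xk (k + l) (St T3))"
        using St_Zk[OF _ ne3] k by simp
      have S4: "St (Xk (k + l) T3) = Xk (k + l) (St T3)" by (rule St_Xk[OF ne3])
      have "St (hsZ tt (k # u) (l # v)) = Zk k (HA (wd []) (Zk l SV + smulW tt (Xk l SV))) + smulW tt (Xk k (HA (wd []) (Zk l SV + smulW tt (Xk l SV))))
        + (Zk l (HA (Zk k (wd [])) SV) + smulW tt (Xk l (HA (Zk k (wd [])) SV)))
        + smulW (1 - 2 * tt) (Zk (k + l) (HA (wd []) SV) + smulW tt (Xk (k + l) (HA (wd []) SV)))
        + smulW (tt ^ 2 - tt) (Xk (k + l) (HA (wd []) SV))"
        unfolding main using S1 S2 S3 S4 IH1 IH2 IH3 KU LV u v SUe by (simp del: preW_wd HA_wd)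
      also have "\<dots> = HA (Zk k (wd [])) (Zk l SV + smulW tt (Xk l SV))" by (rule alg_en[OF k l hV[OF v]])
      finally show ?thesis using KU LV u v SUe by (simp del: preW_wd HA_wd)
    qed
  next
    case u: False
    have ne3: "[] \<notin> Poly_Mapping.keys T3" unfolding T3_def using keys_hsZ u by blast
    have S3: "St (Zk (k + l) T3) = Zk (k + l) (St T3) + smulW tt (Xk (k + l) (St T3))"
      using St_Zk[OF _ ne3] k by simp
    have S4: "St (Xk (k + l) T3) = Xk (k + l) (St T3)" by (rule St_Xk[OF ne3])
    show ?thesis
    proof (cases "v = []")
      case v: True
      have SVe: "SV = wd []" unfolding SV_def using v by simp
      have "St (hsZ tt (k # u) (l # v)) = Zk k (HA SU (Zk l (wd []))) + smulW tt (Xk k (HA SU (Zk l (wd []))))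
        + (Zk l (HA (Zk k SU + smulW tt (Xk k SU)) (wd [])) + smulW tt (Xk l (HA (Zk k SU + smulW tt (Xk k SU)) (wd []))))
        + smulW (1 - 2 * tt) (Zk (k + l) (HA SU (wd [])) + smulW tt (Xk (k + l) (HA SU (wd []))))
        + smulW (tt ^ 2 - tt) (Xk (k + l) (HA SU (wd [])))"
        unfolding main using S1 S2 S3 S4 IH1 IH2 IH3 KU LV u v SVe by (simp del: preW_wd HA_wd)
      also have "\<dots> = HA (Zk k SU + smulW tt (Xk k SU)) (Zk l (wd []))" by (rule alg_ne[OF k l hU[OF u]])
      finally show ?thesis using KU LV u v SVe by (simp del: preW_wd HA_wd)
    next
      case v: False
      have "St (hsZ tt (k # u) (l # v)) = Zk k (HA SU (Zk l SV + smulW tt (Xk l SV))) + smulW tt (Xk k (HA SU (Zk l SV + smulW tt (Xk l SV))))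
        + (Zk l (HA (Zk k SU + smulW tt (Xk k SU)) SV) + smulW tt (Xk l (HA (Zk k SU + smulW tt (Xk k SU)) SV)))
        + smulW (1 - 2 * tt) (Zk (k + l) (HA SU SV) + smulW tt (Xk (k + l) (HA SU SV)))
        + smulW (tt ^ 2 - tt) (Xk (k + l) (HA SU SV))"
        unfolding main using S1 S2 S3 S4 IH1 IH2 IH3 KU LV u v by (simp del: preW_wd HA_wd)
      also have "\<dots> = HA (Zk k SU + smulW tt (Xk k SU)) (Zk l SV + smulW tt (Xk l SV))" by (rule alg_nn[OF k l hU[OF u] hV[OF v]])
      finally show ?thesis using KU LV u v by simp
    qed
  qed
qed

lemma bilin_superset:
  assumes "finite S" "Poly_Mapping.keys p \<subseteq> S" "finite T" "Poly_Mapping.keys q \<subseteq> T"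
  shows "bilin B p q = (\<Sum>u\<in>S. \<Sum>v\<in>T. smulW (Poly_Mapping.lookup p u * Poly_Mapping.lookup q v) (B u v))"
proof -
  have "bilin B p q = (\<Sum>u\<in>S. \<Sum>v\<in>Poly_Mapping.keys q. smulW (Poly_Mapping.lookup p u * Poly_Mapping.lookup q v) (B u v))"
    unfolding bilin_def using assms(1,2)
    by (intro sum.mono_neutral_cong_left) (auto simp: in_keys_iff)
  also have "\<dots> = (\<Sum>u\<in>S. \<Sum>v\<in>T. smulW (Poly_Mapping.lookup p u * Poly_Mapping.lookup q v) (B u v))"
    using assms(3,4) by (intro sum.cong refl sum.mono_neutral_cong_left) (auto simp: in_keys_iff)
  finally show ?thesis .
qed

lemma lookup_bilin_superset:
  assumes "finite S" "Poly_Mapping.keys p \<subseteq> S" "finite T" "Poly_Mapping.keys q \<subseteq> T"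
  shows "Poly_Mapping.lookup (bilin B p q) w = (\<Sum>u\<in>S. \<Sum>v\<in>T. Poly_Mapping.lookup p u * Poly_Mapping.lookup q v * Poly_Mapping.lookup (B u v) w)"
  by (simp add: bilin_superset[OF assms] lookup_sum)

lemma lookup_coeffW [simp]: "Poly_Mapping.lookup (coeffW p n) w = coeff (Poly_Mapping.lookup p w) n"
  by (simp add: coeffW_def Poly_Mapping.map.rep_eq when_def)

lemma keys_coeffW: "Poly_Mapping.keys (coeffW p n) \<subseteq> Poly_Mapping.keys p"
  by (auto simp: in_keys_iff)

definition cmap :: "(word \<Rightarrow>\<^sub>0 'a::comm_ring_1) \<Rightarrow> (word \<Rightarrow>\<^sub>0 'a poly)" where
  "cmap p = Poly_Mapping.map (\<lambda>c. [:c:]) p"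

lemma lookup_cmap [simp]: "Poly_Mapping.lookup (cmap p) w = [:Poly_Mapping.lookup p w:]"
  by (simp add: cmap_def Poly_Mapping.map.rep_eq when_def)

lemma keys_cmap: "Poly_Mapping.keys (cmap p) = Poly_Mapping.keys p"
  by (auto simp: in_keys_iff)

lemma coeffW_bilin_const:
  assumes B: "\<And>u v. B u v = cmap (B0 u v)"
  shows "coeffW (bilin B P Q) n = (\<Sum>i\<le>n. bilin B0 (coeffW P i) (coeffW Q (n - i)))"
proof (rule poly_mapping_eqI)
  fix w
  let ?S = "Poly_Mapping.keys P" and ?T = "Poly_Mapping.keys Q"
  have "Poly_Mapping.lookup (coeffW (bilin B P Q) n) w
      = coeff (\<Sum>u\<in>?S. \<Sum>v\<in>?T. Poly_Mapping.lookup P u * Poly_Mapping.lookup Q v * [:Poly_Mapping.lookup (B0 u v) w:]) n"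
    by (simp add: lookup_bilin_superset[of ?S P ?T Q] B)
  also have "\<dots> = (\<Sum>u\<in>?S. \<Sum>v\<in>?T. (\<Sum>i\<le>n. coeff (Poly_Mapping.lookup P u) i * coeff (Poly_Mapping.lookup Q v) (n - i)) * Poly_Mapping.lookup (B0 u v) w)"
    by (simp add: coeff_sum coeff_mult mult.commute)
  also have "\<dots> = (\<Sum>u\<in>?S. \<Sum>v\<in>?T. \<Sum>i\<le>n. coeff (Poly_Mapping.lookup P u) i * coeff (Poly_Mapping.lookup Q v) (n - i) * Poly_Mapping.lookup (B0 u v) w)"
    by (simp only: sum_distrib_right)
  also have "\<dots> = (\<Sum>u\<in>?S. \<Sum>i\<le>n. \<Sum>v\<in>?T. coeff (Poly_Mapping.lookup P u) i * coeff (Poly_Mapping.lookup Q v) (n - i) * Poly_Mapping.lookup (B0 u v) w)"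
    by (rule sum.cong[OF refl], rule sum.swap)
  also have "\<dots> = (\<Sum>i\<le>n. \<Sum>u\<in>?S. \<Sum>v\<in>?T. coeff (Poly_Mapping.lookup P u) i * coeff (Poly_Mapping.lookup Q v) (n - i) * Poly_Mapping.lookup (B0 u v) w)"
    by (rule sum.swap)
  also have "\<dots> = Poly_Mapping.lookup (\<Sum>i\<le>n. bilin B0 (coeffW P i) (coeffW Q (n - i))) w"
    by (simp add: lookup_sum lookup_bilin_superset[OF _ keys_coeffW _ keys_coeffW])
  finally show "Poly_Mapping.lookup (coeffW (bilin B P Q) n) w = Poly_Mapping.lookup (\<Sum>i\<le>n. bilin B0 (coeffW P i) (coeffW Q (n - i))) w" .
qed

locale chom =
  fixes f :: "'a::comm_ring_1 \<Rightarrow> 'b::comm_ring_1"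
  assumes f0: "f 0 = 0" and f1: "f 1 = 1" and fadd: "\<And>a b. f (a + b) = f a + f b"
    and fmult: "\<And>a b. f (a * b) = f a * f b"
begin

lemma fminus: "f (- a) = - f a"
proof -
  have "f (- a) + f a = 0" using fadd[of "- a" a] f0 by simp
  then show ?thesis by (simp add: eq_neg_iff_add_eq_0)
qed
lemma fdiff: "f (a - b) = f a - f b"
  using fadd[of a "- b"] fminus[of b] by simp
lemma fpow: "f (a ^ n) = f a ^ n"
  by (induction n) (simp_all add: f1 fmult)
lemma fnum: "f 2 = 2"
  using fadd[of 1 1] f1 by (simp add: one_add_one)

definition M :: "(word \<Rightarrow>\<^sub>0 'a) \<Rightarrow> (word \<Rightarrow>\<^sub>0 'b)" where "M p = Poly_Mapping.map f p"

lemma lookup_M [simp]: "Poly_Mapping.lookup (M p) w = f (Poly_Mapping.lookup p w)"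
  by (simp add: M_def Poly_Mapping.map.rep_eq when_def f0)

lemma M_add: "M (p + q) = M p + M q"
  by (rule poly_mapping_eqI) (simp add: lookup_add fadd)
lemma M_diff: "M (p - q) = M p - M q"
  by (rule poly_mapping_eqI) (simp add: lookup_minus fdiff)
lemma M_zero [simp]: "M 0 = 0"
  by (rule poly_mapping_eqI) (simp add: f0)
lemma M_smulW: "M (smulW c p) = smulW (f c) (M p)"
  by (rule poly_mapping_eqI) (simp add: fmult)
lemma M_wd [simp]: "M (wd w) = wd w"
  by (rule poly_mapping_eqI) (simp add: lookup_wd f0 f1)
lemma M_single: "M (Poly_Mapping.single w c) = Poly_Mapping.single w (f c)"
  by (rule poly_mapping_eqI) (simp add: lookup_single when_def f0)
lemma M_sum: "M (sum g I) = (\<Sum>i\<in>I. M (g i))"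
  by (induction I rule: infinite_finite_induct) (simp_all add: M_add)
lemma M_lin: "M (lin F p) = lin (\<lambda>u. M (F u)) (M p)"
proof -
  have "M (lin F p) = (\<Sum>u\<in>Poly_Mapping.keys p. smulW (f (Poly_Mapping.lookup p u)) (M (F u)))"
    by (simp add: lin_def M_sum M_smulW)
  also have "\<dots> = lin (\<lambda>u. M (F u)) (M p)"
  proof -
    have "lin (\<lambda>u. M (F u)) (M p) = (\<Sum>u\<in>Poly_Mapping.keys p. smulW (Poly_Mapping.lookup (M p) u) (M (F u)))"
      by (rule lin_superset) (auto simp: in_keys_iff f0)
    then show ?thesis by simp
  qed
  finally show ?thesis .
qed
lemma M_preW: "M (preW u p) = preW u (M p)"
  by (simp add: preW_lin M_lin)
lemma M_rhoW: "M (rhoW tau a w) = rhoW (f tau) a w"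
  by (cases a) (simp_all add: rhoW_def M_single)

lemma M_shW: "M (shW tau u v) = shW (f tau) u v"
  by (induction tau u v rule: shW.induct) (simp_all add: M_add M_diff M_preW M_rhoW)

lemma M_hsZ: "M (hsZ tau u v) = hsZ (f tau) u v"
  by (induction tau u v rule: hsZ.induct) (simp_all add: M_add M_preW M_smulW fdiff fmult fpow fnum f1)

end

interpretation cpoly: chom "\<lambda>c::'a::comm_ring_1. [:c:]"
  by unfold_locales (simp_all add: one_pCons)

lemma cmap_eq: "cmap = cpoly.M"
  by (rule ext) (simp add: cmap_def cpoly.M_def)

lemma shW0_cmap: "shW (0::'a::comm_ring_1 poly) u v = cmap (shW 0 u v)"
proof -
  have "cmap (shW (0::'a) u v) = shW [:0::'a:] u v" unfolding cmap_eq by (rule cpoly.M_shW)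
  then show ?thesis by simp
qed

lemma hsW0_cmap: "hsW (0::'a::comm_ring_1 poly) u v = cmap (hsW 0 u v)"
proof -
  have "cmap (hsZ (0::'a) (zs u) (zs v)) = hsZ [:0::'a:] (zs u) (zs v)" unfolding cmap_eq by (rule cpoly.M_hsZ)
  then show ?thesis by (simp add: hsW_def)
qed

lemma coeffW_SH: "coeffW (shuffle P Q) n = (\<Sum>i\<le>n. shuffle (coeffW P i) (coeffW Q (n - i)))"
  unfolding shuffle_def by (rule coeffW_bilin_const[OF shW0_cmap])

lemma coeffW_HA: "coeffW (harmonic P Q) n = (\<Sum>i\<le>n. harmonic (coeffW P i) (coeffW Q (n - i)))"
  unfolding harmonic_def by (rule coeffW_bilin_const[OF hsW0_cmap])

interpretation c0: chom "\<lambda>c::'a::comm_ring_1 poly. coeff c 0"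
  by unfold_locales (simp_all add: coeff_mult_0)

lemma coeffW0_eq: "coeffW p 0 = c0.M p"
  by (rule poly_mapping_eqI) simp

lemma c0_sigW: "c0.M (sigW w) = wd w"
  by (induction w rule: sigW.induct) (simp_all add: c0.M_add c0.M_preW c0.M_smulW)

lemma c0_StW: "c0.M (StW w) = wd w"
  by (simp add: StW_def sufW_lin c0.M_lin c0_sigW)

lemma coeffW_St0: "coeffW (St p) 0 = coeffW p (0::nat)"
proof -
  have "c0.M (St p) = lin wd (c0.M p)"
    by (simp add: St_def c0.M_lin c0_StW)
  then show ?thesis by (simp add: coeffW0_eq lin_expand)
qed

lemma coeffW_cmap: "coeffW (cmap p) n = (if n = 0 then p else 0)"
  by (rule poly_mapping_eqI) (cases n, simp_all)

section \<open>S_t intertwines the products\<close>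

lemma St_tshuffle: "St (tshuffle P Q) = shuffle (St P) (St (Q :: _ \<Rightarrow>\<^sub>0 'k::comm_ring_1 poly))"
  unfolding tshuffle_def
  by (rule bilin_eqI[where F = "\<lambda>P Q. St (bilin (shW tt) P Q)" and G = "\<lambda>P Q. shuffle (St P) (St Q)"])
     (simp_all add: linW_comp[OF linW_St linW_bilin1] linW_comp[OF linW_St linW_bilin2]
       linW_comp[OF linW_SH1 linW_St] linW_comp[OF linW_SH2 linW_St] St_tshuffle_words)

lemma St_hsW: "h1w u \<Longrightarrow> h1w v \<Longrightarrow> St (hsW tt u v) = harmonic (StW u) (StW v :: _ \<Rightarrow>\<^sub>0 'k::comm_ring_1 poly)"
  unfolding hsW_def
  using St_hsZ[of "zs u" "zs v", where 'k = 'k] zsaux_pos[of _ 0 u] zsaux_pos[of _ 0 v]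
  by (simp add: zs_def[symmetric] zsw_zs)

lemma St_tharmonic:
  assumes "\<And>w. w \<in> Poly_Mapping.keys P \<Longrightarrow> h1w w" "\<And>w. w \<in> Poly_Mapping.keys Q \<Longrightarrow> h1w w"
  shows "St (tharmonic P Q) = harmonic (St P) (St (Q :: _ \<Rightarrow>\<^sub>0 'k::comm_ring_1 poly))"
  unfolding tharmonic_def
  by (rule bilin_eqI[where F = "\<lambda>P Q. St (bilin (hsW tt) P Q)" and G = "\<lambda>P Q. harmonic (St P) (St Q)"])
     (simp_all add: linW_comp[OF linW_St linW_bilin1] linW_comp[OF linW_St linW_bilin2]
       linW_comp[OF linW_HA1 linW_St] linW_comp[OF linW_HA2 linW_St] St_hsW assms)

lemma keys_wd_mem: "w \<in> Poly_Mapping.keys (wd v :: _ \<Rightarrow>\<^sub>0 'a::comm_semiring_1) \<Longrightarrow> w = v"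
  by (simp add: in_keys_iff lookup_wd split: if_splits)

lemma in_h0_iff: "in_h0 p \<longleftrightarrow> (\<forall>w\<in>Poly_Mapping.keys p. h0w w)"
  by (simp add: in_h0_def h0w_def)

lemma keys_bilin_sub: "Poly_Mapping.keys (bilin B p q) \<subseteq> (\<Union>u\<in>Poly_Mapping.keys p. \<Union>v\<in>Poly_Mapping.keys q. Poly_Mapping.keys (B u v :: _ \<Rightarrow>\<^sub>0 'a::comm_semiring_1))"
proof -
  have "Poly_Mapping.keys (bilin B p q) \<subseteq> (\<Union>u\<in>Poly_Mapping.keys p. Poly_Mapping.keys (lin (B u) q))"
    unfolding bilin_lin by (rule keys_lin)
  also have "\<dots> \<subseteq> (\<Union>u\<in>Poly_Mapping.keys p. \<Union>v\<in>Poly_Mapping.keys q. Poly_Mapping.keys (B u v))"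
    using keys_lin[of "B _" q] by blast
  finally show ?thesis .
qed

lemma keys_shW_h1: "h1w u \<Longrightarrow> h1w v \<Longrightarrow> w \<in> Poly_Mapping.keys (shW tau u v) \<Longrightarrow> h1w w"
proof (induction tau u v arbitrary: w rule: shW.induct)
  case (1 tau w)
  then show ?case using keys_wd by fastforce
next
  case (2 tau a w1)
  then show ?case using keys_wd by fastforce
next
  case (3 tau a w1 b w2)
  let ?A = "preW [a] (shW tau w1 (b # w2))" and ?B = "preW [b] (shW tau (a # w1) w2)"
  let ?C = "(if w1 = [] then rhoW tau a (b # w2) else 0)" and ?D = "(if w2 = [] then rhoW tau b (a # w1) else 0)"
  have h1: "h1w w1" "h1w w2" using 3(3,4) by (auto simp: h1w_def split: if_splits)
  have "w \<in> Poly_Mapping.keys (?A + ?B - ?C - ?D)"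
    using 3(5) by (simp only: shW.simps)
  then have "w \<in> Poly_Mapping.keys ?A \<union> Poly_Mapping.keys ?B \<union> Poly_Mapping.keys ?C \<union> Poly_Mapping.keys ?D"
    using keys_add[of ?A ?B] keys_diff_sub[of "?A + ?B" ?C] keys_diff_sub[of "?A + ?B - ?C" ?D] by blast
  moreover have "Poly_Mapping.keys ?C \<subseteq> {X # b # w2}" "Poly_Mapping.keys ?D \<subseteq> {X # a # w1}"
    by (cases a; cases b; auto simp: rhoW_def)+
  ultimately consider "w \<in> Poly_Mapping.keys ?A" | "w \<in> Poly_Mapping.keys ?B" | "w = X # b # w2" | "w = X # a # w1"
    by blast
  then show ?case
  proof cases
    case 1
    then obtain w' where w': "w = a # w'" "w' \<in> Poly_Mapping.keys (shW tau w1 (b # w2))" using keys_preW by fastforce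
    then have "w' \<noteq> []" using keys_shW_nonempty by blast
    then show ?thesis using w' 3(1)[OF h1(1) 3(4) w'(2)] by (simp add: h1w_def)
  next
    case 2
    then obtain w' where w': "w = b # w'" "w' \<in> Poly_Mapping.keys (shW tau (a # w1) w2)" using keys_preW by fastforce
    then have "w' \<noteq> []" using keys_shW_nonempty by blast
    then show ?thesis using w' 3(2)[OF 3(3) h1(2) w'(2)] by (simp add: h1w_def)
  next
    case 3 then show ?thesis using \<open>h1w (b # w2)\<close> by (simp add: h1w_def)
  next
    case 4 then show ?thesis using \<open>h1w (a # w1)\<close> by (simp add: h1w_def)
  qed
qed

lemma keys_shW_h0:
  assumes "h0w u" "h0w v" "w \<in> Poly_Mapping.keys (shW (0::'a::comm_ring_1) u v)"
  shows "h0w w"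
proof (cases "u = [] \<or> v = []")
  case True
  then have "shW (0::'a) u v = wd (if u = [] then v else u)" by auto
  then have "w = (if u = [] then v else u)" using assms(3) keys_wd_mem by metis
  then show ?thesis using assms True by (auto simp: h0w_def)
next
  case False
  then obtain u' v' where uv: "u = X # u'" "v = X # v'" using assms(1,2) by (cases u; cases v) (auto simp: h0w_def)
  have h1: "h1w w" using keys_shW_h1[OF _ _ assms(3)] assms(1,2) by (auto simp: h0w_def h1w_def)
  have "w \<in> Poly_Mapping.keys (preW [X] (shW 0 u' (X # v')) + preW [X] (shW 0 (X # u') v') :: _ \<Rightarrow>\<^sub>0 'a)"
    using assms(3) uv by (simp cong: if_cong)
  then have "w \<in> Poly_Mapping.keys (preW [X] (shW 0 u' (X # v')) :: _ \<Rightarrow>\<^sub>0 'a) \<union> Poly_Mapping.keys (preW [X] (shW 0 (X # u') v') :: _ \<Rightarrow>\<^sub>0 'a)"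
    by (rule subsetD[OF keys_add])
  then have "hd w = X" using keys_preW[of "[X]" "shW (0::'a) u' (X # v')"] keys_preW[of "[X]" "shW (0::'a) (X # u') v'"] by auto
  then show ?thesis using h1 by (auto simp: h0w_def h1w_def)
qed

lemma h0w_zs:
  assumes "h0w u" "u \<noteq> []"
  obtains m ms where "zs u = m # ms" "m \<ge> 2"
proof -
  have "h1w u" using assms by (auto simp: h0w_def h1w_def)
  then obtain m ms where zsa: "zs u = m # ms" using assms(2) zsw_zs[OF \<open>h1w u\<close>] by (cases "zs u") auto
  have "m \<ge> 1" using zsa zsaux_pos[of m 0 u] by (simp add: zs_def)
  moreover have "u = zw m @ zsw ms" using zsw_zs[OF \<open>h1w u\<close>] zsa by simp
  moreover have "hd u = X" using assms by (simp add: h0w_def)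
  ultimately have "m \<ge> 2"
  proof -
    assume m1: "m \<ge> 1" and ue: "u = zw m @ zsw ms" and hx: "hd u = X"
    have "m \<noteq> 1"
    proof
      assume "m = 1"
      then have "hd u = Y" using ue by (simp add: zw_def)
      then show False using hx by simp
    qed
    then show ?thesis using m1 by simp
  qed
  then show ?thesis using that zsa by blast
qed

lemma hd_zw: "m \<ge> 2 \<Longrightarrow> hd (zw m @ w) = X"
  by (cases m) (auto simp: zw_def)

lemma keys_hsW_h0:
  assumes "h0w u" "h0w v" "w \<in> Poly_Mapping.keys (hsW (0::'a::comm_ring_1) u v)"
  shows "h0w w"
proof (cases "u = [] \<or> v = []")
  case True
  have "h1w u" "h1w v" using assms by (auto simp: h0w_def h1w_def)
  then have "hsW (0::'a) u v = wd (if u = [] then v else u)" using True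
    by (auto simp: hsW_def zsw_zs)
  then have "w = (if u = [] then v else u)" using assms(3) keys_wd_mem by metis
  then show ?thesis using assms True by (auto simp: h0w_def)
next
  case False
  obtain m ms where m: "zs u = m # ms" "m \<ge> 2" using h0w_zs assms(1) False by blast
  obtain n ns where n: "zs v = n # ns" "n \<ge> 2" using h0w_zs assms(2) False by blast
  have h1: "h1w w" using keys_hsZ[of w "0::'a" "zs u" "zs v"] assms(3) by (simp add: hsW_def)
  let ?A = "preW (zw m) (hsZ (0::'a) ms (n # ns))" and ?B = "preW (zw n) (hsZ (0::'a) (m # ms) ns)"
    and ?C = "preW (zw (m + n)) (hsZ (0::'a) ms ns)"
  have "w \<in> Poly_Mapping.keys (?A + ?B + ?C)" using assms(3) by (simp add: hsW_def m n cong: if_cong)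
  then have "w \<in> Poly_Mapping.keys ?A \<union> Poly_Mapping.keys ?B \<union> Poly_Mapping.keys ?C"
    using keys_add[of ?A ?B] keys_add[of "?A + ?B" ?C] by blast
  then have "hd w = X"
    using keys_preW[of "zw m" "hsZ (0::'a) ms (n # ns)"] keys_preW[of "zw n" "hsZ (0::'a) (m # ms) ns"]
      keys_preW[of "zw (m + n)" "hsZ (0::'a) ms ns"] hd_zw[of m] hd_zw[of n] hd_zw[of "m + n"] m(2) n(2) by auto
  then show ?thesis using h1 by (auto simp: h0w_def h1w_def)
qed

lemma in_h0_shuffle: "in_h0 p \<Longrightarrow> in_h0 q \<Longrightarrow> in_h0 (shuffle p (q :: _ \<Rightarrow>\<^sub>0 'a::comm_ring_1))"
  unfolding in_h0_iff shuffle_def using keys_bilin_sub keys_shW_h0 by blast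

lemma in_h0_harmonic: "in_h0 p \<Longrightarrow> in_h0 q \<Longrightarrow> in_h0 (harmonic p (q :: _ \<Rightarrow>\<^sub>0 'a::comm_ring_1))"
  unfolding in_h0_iff harmonic_def using keys_bilin_sub keys_hsW_h0 by blast

lemma in_h0_coeffW: "in_h0 p \<Longrightarrow> in_h0 (coeffW p n)"
  unfolding in_h0_iff using keys_coeffW by blast

lemma in_h0_St: "in_h0 p \<Longrightarrow> in_h0 (St (p :: _ \<Rightarrow>\<^sub>0 'k::comm_ring_1 poly))"
  unfolding in_h0_iff using St_h0w by blast

lemma in_h0_cmap: "in_h0 p \<Longrightarrow> in_h0 (cmap p)"
  unfolding in_h0_iff by (simp add: keys_cmap)

lemma in_h0_zero: "in_h0 0"
  by (simp add: in_h0_def)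

lemma in_h0_add: "in_h0 p \<Longrightarrow> in_h0 q \<Longrightarrow> in_h0 (p + q)"
  unfolding in_h0_def using subsetD[OF keys_add[of p q]] by blast

lemma in_h0_sum: "(\<And>i. i \<in> I \<Longrightarrow> in_h0 (g i)) \<Longrightarrow> in_h0 (sum g I)"
  unfolding in_h0_def using subsetD[OF keys_sum_sub[of g I]] by blast

lemma Z0:
  assumes "K_linear_on_h0 phi Z" shows "Z 0 = 0"
proof -
  have "\<forall>p q. in_h0 p \<longrightarrow> in_h0 q \<longrightarrow> Z (p + q) = Z p + Z q" using assms by (simp add: K_linear_on_h0_def)
  then have "Z (0 + 0) = Z 0 + Z 0" using in_h0_zero by blast
  then show ?thesis by simp
qed

lemma Z_sum:
  assumes "K_linear_on_h0 phi Z" "\<And>i. i \<in> I \<Longrightarrow> in_h0 (g i)"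
  shows "Z (sum g I) = (\<Sum>i\<in>I. Z (g i))"
  using assms(2)
proof (induction I rule: infinite_finite_induct)
  case (infinite A) then show ?case using Z0[OF assms(1)] by simp
next
  case empty then show ?case using Z0[OF assms(1)] by simp
next
  case (insert x F)
  have "in_h0 (sum g F)" using insert.prems by (intro in_h0_sum) auto
  moreover have "in_h0 (g x)" using insert.prems by auto
  ultimately have "Z (g x + sum g F) = Z (g x) + Z (sum g F)"
    using assms(1) by (simp add: K_linear_on_h0_def)
  then show ?case using insert by simp
qed

lemma coeffW_high:
  assumes "n > (\<Sum>w\<in>Poly_Mapping.keys p. Polynomial.degree (Poly_Mapping.lookup p w))"
  shows "coeffW p n = 0"
proof (rule poly_mapping_eqI)
  fix w
  show "Poly_Mapping.lookup (coeffW p n) w = Poly_Mapping.lookup 0 w"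
  proof (cases "w \<in> Poly_Mapping.keys p")
    case True
    then have "Polynomial.degree (Poly_Mapping.lookup p w) \<le> (\<Sum>w\<in>Poly_Mapping.keys p. Polynomial.degree (Poly_Mapping.lookup p w))"
      by (intro member_le_sum) auto
    then show ?thesis using assms by (simp add: coeff_eq_0)
  next
    case False then show ?thesis by (simp add: in_keys_iff)
  qed
qed

lemma coeff_Zext:
  assumes "Z 0 = 0"
  shows "coeff (Zext Z p) n = Z (coeffW p n)"
proof -
  let ?D = "\<Sum>w\<in>Poly_Mapping.keys p. Polynomial.degree (Poly_Mapping.lookup p w)"
  have "coeff (Zext Z p) n = (\<Sum>i\<le>?D. if i = n then Z (coeffW p i) else 0)"
    by (simp add: Zext_def coeff_sum coeff_monom)
  also have "\<dots> = (if n \<le> ?D then Z (coeffW p n) else 0)"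
    by (simp add: sum.delta')
  also have "\<dots> = Z (coeffW p n)"
    using coeffW_high[of p n] assms by auto
  finally show ?thesis .
qed

lemma Zext_mult:
  assumes lin: "K_linear_on_h0 phi Z" and A: "in_h0 A" and B: "in_h0 B"
    and cf: "\<And>n. coeffW (Pr A B) n = (\<Sum>i\<le>n. Bk (coeffW A i) (coeffW B (n - i)))"
    and cl: "\<And>a b. in_h0 a \<Longrightarrow> in_h0 b \<Longrightarrow> in_h0 (Bk a b)"
    and mu: "\<And>a b. in_h0 a \<Longrightarrow> in_h0 b \<Longrightarrow> Z (Bk a b) = Z a * Z b"
  shows "Zext Z (Pr A B) = Zext Z A * Zext Z B"
proof (rule poly_eqI)
  fix n
  have z0: "Z 0 = 0" by (rule Z0[OF lin])
  have "coeff (Zext Z (Pr A B)) n = Z (\<Sum>i\<le>n. Bk (coeffW A i) (coeffW B (n - i)))"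
    by (simp add: coeff_Zext[where Z = Z, OF z0] cf)
  also have "\<dots> = (\<Sum>i\<le>n. Z (Bk (coeffW A i) (coeffW B (n - i))))"
    by (rule Z_sum[OF lin]) (intro cl in_h0_coeffW A B)
  also have "\<dots> = (\<Sum>i\<le>n. Z (coeffW A i) * Z (coeffW B (n - i)))"
    by (intro sum.cong refl mu in_h0_coeffW A B)
  also have "\<dots> = coeff (Zext Z A * Zext Z B) n"
    by (simp add: coeff_mult coeff_Zext[where Z = Z, OF z0])
  finally show "coeff (Zext Z (Pr A B)) n = coeff (Zext Z A * Zext Z B) n" .
qed

theorem proposition2p2:
  fixes phi :: "'k::field_char_0 \<Rightarrow> 'r::comm_ring_1"
    and Z :: "(word \<Rightarrow>\<^sub>0 'k) \<Rightarrow> 'r"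
  assumes "is_K_algebra_hom phi"
    and "K_linear_on_h0 phi Z"
  shows "double_shuffle Z \<longleftrightarrow>
    (\<forall>w1 w2 :: word \<Rightarrow>\<^sub>0 'k poly. in_h0 w1 \<longrightarrow> in_h0 w2 \<longrightarrow>
       Zt Z (tshuffle w1 w2) = Zt Z w1 * Zt Z w2 \<and>
       Zt Z w1 * Zt Z w2 = Zt Z (tharmonic w1 w2))"
proof
  note lin = assms(2)
  have z0: "Z 0 = 0" by (rule Z0[OF lin])
  {
    assume DS: "double_shuffle Z"
    show "\<forall>w1 w2 :: word \<Rightarrow>\<^sub>0 'k poly. in_h0 w1 \<longrightarrow> in_h0 w2 \<longrightarrow>
       Zt Z (tshuffle w1 w2) = Zt Z w1 * Zt Z w2 \<and> Zt Z w1 * Zt Z w2 = Zt Z (tharmonic w1 w2)"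
    proof (intro allI impI conjI)
      fix w1 w2 :: "word \<Rightarrow>\<^sub>0 'k poly"
      assume h1: "in_h0 w1" and h2: "in_h0 w2"
      have A: "in_h0 (St w1)" and B: "in_h0 (St w2)" using in_h0_St h1 h2 by auto
      have k1: "\<And>w. w \<in> Poly_Mapping.keys w1 \<Longrightarrow> h1w w" and k2: "\<And>w. w \<in> Poly_Mapping.keys w2 \<Longrightarrow> h1w w"
        using h1 h2 by (auto simp: in_h0_def h1w_def)
      show "Zt Z (tshuffle w1 w2) = Zt Z w1 * Zt Z w2"
        unfolding Zt_def St_tshuffle
        by (rule Zext_mult[where Z = Z and phi = phi and Pr = shuffle and Bk = shuffle, OF lin A B coeffW_SH in_h0_shuffle]) (use DS in \<open>auto simp: double_shuffle_def\<close>)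
      have sh: "St (tharmonic w1 w2) = harmonic (St w1) (St w2)" by (rule St_tharmonic[OF k1 k2])
      show "Zt Z w1 * Zt Z w2 = Zt Z (tharmonic w1 w2)"
        unfolding Zt_def sh
        by (rule Zext_mult[where Z = Z and phi = phi and Pr = harmonic and Bk = harmonic, OF lin A B coeffW_HA in_h0_harmonic, symmetric]) (use DS in \<open>auto simp: double_shuffle_def\<close>)
    qed
  }
  {
    assume TS: "\<forall>w1 w2 :: word \<Rightarrow>\<^sub>0 'k poly. in_h0 w1 \<longrightarrow> in_h0 w2 \<longrightarrow>
       Zt Z (tshuffle w1 w2) = Zt Z w1 * Zt Z w2 \<and> Zt Z w1 * Zt Z w2 = Zt Z (tharmonic w1 w2)"
    show "double_shuffle Z"
      unfolding double_shuffle_def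
    proof (intro allI impI conjI)
      fix w1 w2 :: "word \<Rightarrow>\<^sub>0 'k"
      assume h1: "in_h0 w1" and h2: "in_h0 w2"
      define P where "P = cmap w1"
      define Q where "Q = cmap w2"
      have hP: "in_h0 P" and hQ: "in_h0 Q" unfolding P_def Q_def using in_h0_cmap h1 h2 by auto
      have k1: "\<And>w. w \<in> Poly_Mapping.keys P \<Longrightarrow> h1w w" and k2: "\<And>w. w \<in> Poly_Mapping.keys Q \<Longrightarrow> h1w w"
        using hP hQ by (auto simp: in_h0_def h1w_def)
      have c1: "coeffW (St P) 0 = w1" unfolding P_def by (simp add: coeffW_St0 coeffW_cmap)
      have c2: "coeffW (St Q) 0 = w2" unfolding Q_def by (simp add: coeffW_St0 coeffW_cmap)
      have m0: "coeff (Zt Z P * Zt Z Q) 0 = Z w1 * Z w2"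
        by (simp add: coeff_mult_0 Zt_def coeff_Zext[where Z = Z, OF z0] c1 c2)
      have "coeff (Zt Z (tshuffle P Q)) 0 = Z (shuffle w1 w2)"
        by (simp add: Zt_def St_tshuffle coeff_Zext[where Z = Z, OF z0] coeffW_SH c1 c2)
      moreover have "Zt Z (tshuffle P Q) = Zt Z P * Zt Z Q" using TS hP hQ by blast
      ultimately show "Z (shuffle w1 w2) = Z w1 * Z w2" using m0 by simp
      have "coeff (Zt Z (tharmonic P Q)) 0 = Z (harmonic w1 w2)"
        by (simp add: Zt_def St_tharmonic[OF k1 k2] coeff_Zext[where Z = Z, OF z0] coeffW_HA c1 c2)
      moreover have "Zt Z P * Zt Z Q = Zt Z (tharmonic P Q)" using TS hP hQ by blast
      ultimately show "Z w1 * Z w2 = Z (harmonic w1 w2)" using m0 by simp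
    qed
  }
qed

end
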